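(* Assume (S) with $a>0$. There is a constant $c_1>0$, independent of $\delta\in(0,1)$, such that for all $u\in\bar S_0$ and all $\delta\in(0,1)$, $$\frac\beta2\|\partial_x^2u\|_{L_2(D)}^2+\frac a4\|\partial_xu\|_{L_2(D)}^2\le E_\delta(u)+c_1.$$
   Context: Standing setting (S): $L>0$, $D=(-L,L)$, $H>0$, $\mathcal R_\delta=D\times(-H-\delta,-H)$; $\Omega_\delta(u)=\{(x,z):x\in D,\ -H-\delta<z<u(x)\}$; $\bar S_0=\{u\in H^2(D):u(\pm L)=\partial_xu(\pm L)=0,\ u\ge-H\}$. $\sigma\in C^2(\bar D\times[-H-1,-H])$, $\sigma>0$; $\sigma_\delta=\delta\sigma$ on $\mathcal R_\delta$, $=1$ on $D\times(-H,\infty)$. $h_b\in C^2(\bar D\times[-H-1,-H]\times[-H,\infty))$, $h\in C^2(\bar D\times[-H,\infty)\times[-H,\infty))$ with $h_b(x,-H,w)=h(x,-H,w)$, $\sigma(x,-H)\partial_zh_b(x,-H,w)=\partial_zh(x,-H,w)$, and with $m>0$: $|\partial_xh_b|+|\partial_zh_b|\le\sqrt{m(1+w^2)}$, $|\partial_wh_b|\le\sqrt m$, $|\partial_xh|+|\partial_zh|\le\sqrt{m(1+w^2)/(H+w)}$, $|\partial_wh|\le\sqrt{m/(H+w)}$. $h_{u,\delta}(x,z)=h_b(x,-H+(z+H)/\delta,u(x))$ for $z<-H$, $=h(x,z,u(x))$ for $z\ge-H$. $\psi_{u,\delta}$: unique $\psi$ with $\psi-h_{u,\delta}\in H^1_0(\Omega_\delta(u))$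 minimizing $\int_{\Omega_\delta(u)}\sigma_\delta|\nabla\psi|^2$. With $\beta>0,\tau\ge0,a\ge0$: $E_\delta(u)=\frac\beta2\|\partial_x^2u\|_{L_2}^2+(\frac\tau2+\frac a4\|\partial_xu\|_{L_2}^2)\|\partial_xu\|_{L_2}^2-\frac12\int_{\Omega_\delta(u)}\sigma_\delta|\nabla\psi_{u,\delta}|^2$. *)

theory Defs
  imports "HOL-Analysis.Analysis"
begin

type_synonym pt2 = "real \<times> real"
type_synonym pt3 = "real \<times> real \<times> real"

definition C2_on :: "'a::real_normed_vector set \<Rightarrow> ('a \<Rightarrow> real) \<Rightarrow> ('a \<Rightarrow> 'a \<Rightarrow>\<^sub>L real) \<Rightarrow> bool" where
  "C2_on K f Df \<longleftrightarrow>
     (\<forall>p\<in>K. (f has_derivative blinfun_apply (Df p)) (at p within K)) \<and>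
     (\<exists>D2f :: 'a \<Rightarrow> 'a \<Rightarrow>\<^sub>L ('a \<Rightarrow>\<^sub>L real).
        (\<forall>p\<in>K. (Df has_derivative blinfun_apply (D2f p)) (at p within K)) \<and> continuous_on K D2f)"

definition smooth2 :: "(pt2 \<Rightarrow> real) \<Rightarrow> bool" where
  "smooth2 f \<longleftrightarrow> (\<exists>S :: (pt2 \<Rightarrow> real) set. f \<in> S \<and>
     (\<forall>g\<in>S. \<exists>g1\<in>S. \<exists>g2\<in>S. \<forall>p.
        (g has_derivative (\<lambda>v. fst v * g1 p + snd v * g2 p)) (at p)))"

definition test_fn :: "pt2 set \<Rightarrow> (pt2 \<Rightarrow> real) \<Rightarrow> bool" where
  "test_fn \<Omega> \<phi> \<longleftrightarrow> smooth2 \<phi> \<and> compact (closure {p. \<phi> p \<noteq> 0})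
      \<and> closure {p. \<phi> p \<noteq> 0} \<subseteq> \<Omega>"

definition grad2 :: "(pt2 \<Rightarrow> real) \<Rightarrow> pt2 \<Rightarrow> pt2" where
  "grad2 \<phi> p = (frechet_derivative \<phi> (at p) (1,0), frechet_derivative \<phi> (at p) (0,1))"

definition L2_on :: "'a::euclidean_space set \<Rightarrow> ('a \<Rightarrow> 'b::euclidean_space) \<Rightarrow> bool" where
  "L2_on S f \<longleftrightarrow> f measurable_on S \<and> (\<lambda>p. (norm (f p))\<^sup>2) integrable_on S"

definition weak_grad :: "pt2 set \<Rightarrow> (pt2 \<Rightarrow> real) \<Rightarrow> (pt2 \<Rightarrow> pt2) \<Rightarrow> bool" where
  "weak_grad \<Omega> f G \<longleftrightarrow> (\<forall>\<phi>. test_fn \<Omega> \<phi> \<longrightarrow>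
      integral \<Omega> (\<lambda>p. f p * fst (grad2 \<phi> p)) = - integral \<Omega> (\<lambda>p. fst (G p) * \<phi> p) \<and>
      integral \<Omega> (\<lambda>p. f p * snd (grad2 \<phi> p)) = - integral \<Omega> (\<lambda>p. snd (G p) * \<phi> p))"

definition H1_on :: "pt2 set \<Rightarrow> (pt2 \<Rightarrow> real) \<Rightarrow> (pt2 \<Rightarrow> pt2) \<Rightarrow> bool" where
  "H1_on \<Omega> f G \<longleftrightarrow> L2_on \<Omega> f \<and> L2_on \<Omega> G \<and> weak_grad \<Omega> f G"

definition H10_on :: "pt2 set \<Rightarrow> (pt2 \<Rightarrow> real) \<Rightarrow> bool" where
  "H10_on \<Omega> v \<longleftrightarrow> (\<exists>G. H1_on \<Omega> v G \<and>
     (\<exists>\<phi> :: nat \<Rightarrow> pt2 \<Rightarrow> real. (\<forall>n. test_fn \<Omega> (\<phi> n)) \<and>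
        (\<lambda>n. integral \<Omega> (\<lambda>p. (\<phi> n p - v p)\<^sup>2)) \<longlonglongrightarrow> 0 \<and>
        (\<lambda>n. integral \<Omega> (\<lambda>p. (norm (grad2 (\<phi> n) p - G p))\<^sup>2)) \<longlonglongrightarrow> 0))"

text \<open>u in H^2(-L,L) (continuous representative), with u1 = u' (C^0, absolutely continuous)
  and u2 = u'' in L2.\<close>
definition H2_repr :: "real \<Rightarrow> (real \<Rightarrow> real) \<Rightarrow> (real \<Rightarrow> real) \<Rightarrow> (real \<Rightarrow> real) \<Rightarrow> bool" where
  "H2_repr L u u1 u2 \<longleftrightarrow> L2_on {-L..L} u2 \<and>
     (\<forall>x\<in>{-L..L}. (u has_real_derivative u1 x) (at x within {-L..L})) \<and>
     (\<forall>x\<in>{-L..L}. u1 x = u1 (-L) + integral {-L..x} u2)"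

definition barS0 :: "real \<Rightarrow> real \<Rightarrow> (real \<Rightarrow> real) \<Rightarrow> (real \<Rightarrow> real) \<Rightarrow> (real \<Rightarrow> real) \<Rightarrow> bool" where
  "barS0 L H u u1 u2 \<longleftrightarrow> H2_repr L u u1 u2 \<and> u (-L) = 0 \<and> u L = 0 \<and> u1 (-L) = 0 \<and> u1 L = 0
     \<and> (\<forall>x\<in>{-L..L}. u x \<ge> -H)"

definition Omega_d :: "real \<Rightarrow> real \<Rightarrow> real \<Rightarrow> (real \<Rightarrow> real) \<Rightarrow> pt2 set" where
  "Omega_d L H \<delta> u = {(x,z). -L < x \<and> x < L \<and> -H - \<delta> < z \<and> z < u x}"

definition sigma_d :: "real \<Rightarrow> real \<Rightarrow> (pt2 \<Rightarrow> real) \<Rightarrow> pt2 \<Rightarrow> real" where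
  "sigma_d H \<delta> \<sigma> p = (if snd p < -H then \<delta> * \<sigma> p else 1)"

definition h_ud :: "real \<Rightarrow> real \<Rightarrow> (pt3 \<Rightarrow> real) \<Rightarrow> (pt3 \<Rightarrow> real) \<Rightarrow> (real \<Rightarrow> real) \<Rightarrow> pt2 \<Rightarrow> real" where
  "h_ud H \<delta> hb h u p = (case p of (x,z) \<Rightarrow>
      if z < -H then hb (x, -H + (z + H) / \<delta>, u x) else h (x, z, u x))"

text \<open>Dirichlet energies of admissible functions; the energy of the minimiser psi_{u,delta}
  is the infimum (= minimum) of this set.\<close>
definition dirichlet_energies :: "real \<Rightarrow> real \<Rightarrow> (pt2 \<Rightarrow> real) \<Rightarrow> (pt3 \<Rightarrow> real) \<Rightarrow> (pt3 \<Rightarrow> real)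
    \<Rightarrow> real \<Rightarrow> (real \<Rightarrow> real) \<Rightarrow> real set" where
  "dirichlet_energies L H \<sigma> hb h \<delta> u =
     {integral (Omega_d L H \<delta> u) (\<lambda>p. sigma_d H \<delta> \<sigma> p * (norm (G p))\<^sup>2) | \<psi> G.
        H1_on (Omega_d L H \<delta> u) \<psi> G \<and>
        H10_on (Omega_d L H \<delta> u) (\<lambda>p. \<psi> p - h_ud H \<delta> hb h u p)}"

definition E_d :: "real \<Rightarrow> real \<Rightarrow> real \<Rightarrow> real \<Rightarrow> real \<Rightarrow> (pt2 \<Rightarrow> real) \<Rightarrow> (pt3 \<Rightarrow> real) \<Rightarrow> (pt3 \<Rightarrow> real)
    \<Rightarrow> real \<Rightarrow> (real \<Rightarrow> real) \<Rightarrow> (real \<Rightarrow> real) \<Rightarrow> (real \<Rightarrow> real) \<Rightarrow> real" where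
  "E_d \<beta> \<tau> a L H \<sigma> hb h \<delta> u u1 u2 =
     \<beta> / 2 * integral {-L..L} (\<lambda>x. (u2 x)\<^sup>2)
     + (\<tau> / 2 + a / 4 * integral {-L..L} (\<lambda>x. (u1 x)\<^sup>2)) * integral {-L..L} (\<lambda>x. (u1 x)\<^sup>2)
     - 1 / 2 * Inf (dirichlet_energies L H \<sigma> hb h \<delta> u)"

end

theory Submission
  imports Defs
begin

lemma open_half_lt: "open \<Omega> \<Longrightarrow> open (\<Omega> \<inter> {p::real\<times>real. snd p < c})"
  by (intro open_Int open_Collect_less continuous_intros) auto
lemma open_half_gt: "open \<Omega> \<Longrightarrow> open (\<Omega> \<inter> {p::real\<times>real. snd p > c})"
  by (intro open_Int open_Collect_less continuous_intros) auto

lemma line_negl: "negligible {p::real\<times>real. snd p = c}"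
proof -
  have "{p::real\<times>real. snd p = c} = {x. x \<bullet> (0,1) = c}" by (auto simp: inner_prod_def)
  moreover have "(0::real,1::real) \<in> Basis" by (simp add: Basis_prod_def)
  ultimately show ?thesis using negligible_standard_hyperplane by metis
qed

lemma open_bdd_leb: "open S \<Longrightarrow> bounded S \<Longrightarrow> S \<in> sets lebesgue"
  using lmeasurable_open fmeasurableD by blast

lemma pw_meas:
  fixes f fa fb :: "real\<times>real \<Rightarrow> 'b::euclidean_space" and \<Omega> :: "(real\<times>real) set"
  assumes o: "open \<Omega>" and bd: "bounded \<Omega>"
    and c1: "continuous_on (\<Omega> \<inter> {p. snd p < c}) fa" and c2: "continuous_on (\<Omega> \<inter> {p. snd p > c}) fb"
    and e1: "\<forall>p\<in>\<Omega>. snd p < c \<longrightarrow> f p = fa p" and e2: "\<forall>p\<in>\<Omega>. snd p > c \<longrightarrow> f p = fb p"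
  shows "f measurable_on \<Omega>"
proof -
  let ?O1 = "\<Omega> \<inter> {p. snd p < c}" and ?O2 = "\<Omega> \<inter> {p. snd p > c}"
  have L1: "?O1 \<in> sets lebesgue"
    by (rule open_bdd_leb[OF open_half_lt[OF o]]) (rule bounded_subset[OF bd], auto)
  have L2: "?O2 \<in> sets lebesgue"
    by (rule open_bdd_leb[OF open_half_gt[OF o]]) (rule bounded_subset[OF bd], auto)
  have m1: "fa measurable_on ?O1"
    using measurable_on_iff_borel_measurable[OF L1] continuous_imp_measurable_on_sets_lebesgue[OF c1 L1] by blast
  have m2: "fb measurable_on ?O2"
    using measurable_on_iff_borel_measurable[OF L2] continuous_imp_measurable_on_sets_lebesgue[OF c2 L2] by blast
  have "(\<lambda>x. (if x \<in> ?O1 then fa x else 0) + (if x \<in> ?O2 then fb x else 0)) measurable_on UNIV"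
    by (rule measurable_on_add) (use m1 m2 measurable_on_UNIV in blast)+
  then have "(\<lambda>x. if x \<in> \<Omega> then f x else 0) measurable_on UNIV"
  proof (rule measurable_on_spike[OF _ line_negl[of c]])
    fix x :: "real\<times>real" assume "x \<in> UNIV - {p. snd p = c}"
    then have "snd x < c \<or> snd x > c" by auto
    then show "(if x \<in> \<Omega> then f x else 0) = (if x \<in> ?O1 then fa x else 0) + (if x \<in> ?O2 then fb x else 0)"
      using e1 e2 by auto
  qed
  then show ?thesis using measurable_on_UNIV by blast
qed

lemma pw_int:
  fixes f fa fb :: "real\<times>real \<Rightarrow> 'b::euclidean_space" and \<Omega> :: "(real\<times>real) set"
  assumes o: "open \<Omega>" and bd: "bounded \<Omega>"
    and c1: "continuous_on (\<Omega> \<inter> {p. snd p < c}) fa" and c2: "continuous_on (\<Omega> \<inter> {p. snd p > c}) fb"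
    and e1: "\<forall>p\<in>\<Omega>. snd p < c \<longrightarrow> f p = fa p" and e2: "\<forall>p\<in>\<Omega>. snd p > c \<longrightarrow> f p = fb p"
    and B: "\<forall>p\<in>\<Omega>. norm (f p) \<le> B"
  shows "f integrable_on \<Omega>"
proof -
  have L: "\<Omega> \<in> sets lebesgue" by (rule open_bdd_leb[OF o bd])
  have "f measurable_on \<Omega>" by (rule pw_meas[OF o bd c1 c2 e1 e2])
  then have "f \<in> borel_measurable (lebesgue_on \<Omega>)" using measurable_on_iff_borel_measurable[OF L] by blast
  moreover have "(\<lambda>x. B) integrable_on \<Omega>" using integrable_on_const lmeasurable_open[OF bd o] by blast
  ultimately show ?thesis using measurable_bounded_by_integrable_imp_integrable B L by blast
qed

lemma pw_L2:
  fixes f fa fb :: "real\<times>real \<Rightarrow> 'b::euclidean_space" and \<Omega> :: "(real\<times>real) set"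
  assumes o: "open \<Omega>" and bd: "bounded \<Omega>"
    and c1: "continuous_on (\<Omega> \<inter> {p. snd p < c}) fa" and c2: "continuous_on (\<Omega> \<inter> {p. snd p > c}) fb"
    and e1: "\<forall>p\<in>\<Omega>. snd p < c \<longrightarrow> f p = fa p" and e2: "\<forall>p\<in>\<Omega>. snd p > c \<longrightarrow> f p = fb p"
    and B: "\<forall>p\<in>\<Omega>. norm (f p) \<le> B"
  shows "L2_on \<Omega> f"
  unfolding L2_on_def
proof
  show "f measurable_on \<Omega>" by (rule pw_meas[OF o bd c1 c2 e1 e2])
  show "(\<lambda>p. (norm (f p))\<^sup>2) integrable_on \<Omega>"
  proof (rule pw_int[where fa="\<lambda>p. (norm (fa p))\<^sup>2" and fb="\<lambda>p. (norm (fb p))\<^sup>2" and c=c and B="B\<^sup>2", OF o bd])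
    show "continuous_on (\<Omega> \<inter> {p. snd p < c}) (\<lambda>p. (norm (fa p))\<^sup>2)" by (intro continuous_intros c1)
    show "continuous_on (\<Omega> \<inter> {p. snd p > c}) (\<lambda>p. (norm (fb p))\<^sup>2)" by (intro continuous_intros c2)
    show "\<forall>p\<in>\<Omega>. snd p < c \<longrightarrow> (norm (f p))\<^sup>2 = (norm (fa p))\<^sup>2" using e1 by auto
    show "\<forall>p\<in>\<Omega>. snd p > c \<longrightarrow> (norm (f p))\<^sup>2 = (norm (fb p))\<^sup>2" using e2 by auto
    show "\<forall>p\<in>\<Omega>. norm ((norm (f p))\<^sup>2) \<le> B\<^sup>2"
      using B by (auto intro!: power_mono)
  qed
qed

lemma split_int:
  fixes f f1 f2 :: "real\<times>real \<Rightarrow> real"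
  assumes c1: "continuous_on (cbox (a,c1) (b,c)) f1" and c2: "continuous_on (cbox (a,c) (b,c2)) f2"
    and e1: "\<forall>p\<in>cbox (a,c1) (b,c). snd p < c \<longrightarrow> f p = f1 p"
    and e2: "\<forall>p\<in>cbox (a,c) (b,c2). snd p > c \<longrightarrow> f p = f2 p"
  shows "(f has_integral (integral (cbox (a,c1) (b,c)) f1 + integral (cbox (a,c) (b,c2)) f2))
           (cbox (a,c1) (b,c) \<union> cbox (a,c) (b,c2))"
proof (rule has_integral_Un)
  show "(f has_integral integral (cbox (a, c1) (b, c)) f1) (cbox (a, c1) (b, c))"
  proof (rule has_integral_spike[OF line_negl[of c]])
    show "(f1 has_integral integral (cbox (a, c1) (b, c)) f1) (cbox (a, c1) (b, c))"
      using c1 integrable_continuous has_integral_integral by blast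
    show "\<And>x. x \<in> cbox (a, c1) (b, c) - {p. snd p = c} \<Longrightarrow> f x = f1 x"
      using e1 by (auto simp: cbox_Pair_iff less_le)
  qed
  show "(f has_integral integral (cbox (a, c) (b, c2)) f2) (cbox (a, c) (b, c2))"
  proof (rule has_integral_spike[OF line_negl[of c]])
    show "(f2 has_integral integral (cbox (a, c) (b, c2)) f2) (cbox (a, c) (b, c2))"
      using c2 integrable_continuous has_integral_integral by blast
    show "\<And>x. x \<in> cbox (a, c) (b, c2) - {p. snd p = c} \<Longrightarrow> f x = f2 x"
      using e2 by (auto simp: cbox_Pair_iff less_le)
  qed
  show "negligible (cbox (a, c1) (b, c) \<inter> cbox (a, c) (b, c2))"
    by (rule negligible_subset[OF line_negl[of c]]) (auto simp: cbox_Pair_iff)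
qed

lemma ftc_box_z:
  fixes Q q :: "real\<times>real \<Rightarrow> real"
  assumes cq: "continuous_on (cbox (a,c) (b,d)) q" and cd: "c \<le> d"
    and dQ: "\<And>x z. x \<in> {a..b} \<Longrightarrow> z \<in> {c..d} \<Longrightarrow>
        ((\<lambda>z'. Q (x,z')) has_real_derivative q (x,z)) (at z within {c..d})"
  shows "integral (cbox (a,c) (b,d)) q = integral {a..b} (\<lambda>x. Q (x,d) - Q (x,c))"
proof -
  have "integral (cbox (a,c) (b,d)) q = integral (cbox a b) (\<lambda>x. integral (cbox c d) (\<lambda>y. q (x, y)))"
    by (rule integral_prod_continuous[OF cq])
  also have "\<dots> = integral (cbox a b) (\<lambda>x. Q (x,d) - Q (x,c))"
  proof (rule integral_cong)
    fix x assume "x \<in> cbox a b"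
    then have x: "x \<in> {a..b}" by simp
    have "((\<lambda>y. q (x, y)) has_integral (Q (x,d) - Q (x,c))) {c..d}"
      using fundamental_theorem_of_calculus[OF cd, of "\<lambda>z. Q (x,z)" "\<lambda>y. q (x,y)"] dQ[OF x]
      by (simp add: has_real_derivative_iff_has_vector_derivative)
    then show "integral (cbox c d) (\<lambda>y. q (x, y)) = Q (x,d) - Q (x,c)"
      by (simp add: integral_unique)
  qed
  finally show ?thesis by (simp add: cbox_interval)
qed

lemma ftc_box_x:
  fixes Q q :: "real\<times>real \<Rightarrow> real"
  assumes cq: "continuous_on (cbox (a,c) (b,d)) q" and ab: "a \<le> b"
    and dQ: "\<And>x z. x \<in> {a..b} \<Longrightarrow> z \<in> {c..d} \<Longrightarrow>
        ((\<lambda>x'. Q (x',z)) has_real_derivative q (x,z)) (at x within {a..b})"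
  shows "integral (cbox (a,c) (b,d)) q = integral {c..d} (\<lambda>z. Q (b,z) - Q (a,z))"
proof -
  have cq': "continuous_on (cbox (a,c) (b,d)) (\<lambda>(x,y). (\<lambda>x y. q (x,y)) x y)"
    using cq by (simp add: case_prod_beta')
  have "integral (cbox (a,c) (b,d)) q = integral (cbox a b) (\<lambda>x. integral (cbox c d) (\<lambda>y. q (x, y)))"
    by (rule integral_prod_continuous[OF cq])
  also have "\<dots> = integral (cbox c d) (\<lambda>y. integral (cbox a b) (\<lambda>x. q (x, y)))"
    using integral_swap_continuous[OF cq'] by simp
  also have "\<dots> = integral (cbox c d) (\<lambda>z. Q (b,z) - Q (a,z))"
  proof (rule integral_cong)
    fix z assume "z \<in> cbox c d"
    then have z: "z \<in> {c..d}" by simp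
    have "((\<lambda>x. q (x, z)) has_integral (Q (b,z) - Q (a,z))) {a..b}"
      using fundamental_theorem_of_calculus[OF ab, of "\<lambda>x. Q (x,z)" "\<lambda>x. q (x,z)"] dQ[OF _ z]
      by (simp add: has_real_derivative_iff_has_vector_derivative)
    then show "integral (cbox a b) (\<lambda>x. q (x, z)) = Q (b,z) - Q (a,z)"
      by (simp add: integral_unique)
  qed
  finally show ?thesis by (simp add: cbox_interval)
qed



lemma chain3_x:
  fixes F :: "real\<times>real\<times>real \<Rightarrow> real" and DF :: "real\<times>real\<times>real \<Rightarrow> (real\<times>real\<times>real) \<Rightarrow>\<^sub>L real"
  assumes dF: "\<forall>q\<in>K. (F has_derivative blinfun_apply (DF q)) (at q within K)"
    and img: "\<forall>x'\<in>S. (x', z, w x') \<in> K" and x: "x \<in> S"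
    and dw: "(w has_real_derivative w') (at x within S)"
  shows "((\<lambda>x'. F (x', z, w x')) has_real_derivative
           (DF (x,z,w x) (1,0,0) + DF (x,z,w x) (0,0,1) * w')) (at x within S)"
proof -
  have dg: "((\<lambda>x'. (x', z, w x')) has_derivative (\<lambda>t. (t, 0, w' * t))) (at x within S)"
    using dw unfolding has_field_derivative_def
    by (intro has_derivative_Pair has_derivative_ident has_derivative_const) auto
  have "((\<lambda>x'. F (x', z, w x')) has_derivative (\<lambda>t. DF (x,z,w x) (t, 0, w' * t))) (at x within S)"
    by (rule has_derivative_in_compose2[where t=K and g=F and g'="\<lambda>q. blinfun_apply (DF q)", OF _ _ x dg])
       (use dF img in auto)
  moreover have "(\<lambda>t. DF (x,z,w x) (t, 0, w' * t)) = (\<lambda>t. (DF (x,z,w x) (1,0,0) + DF (x,z,w x) (0,0,1) * w') * t)"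
  proof
    fix t
    have e: "(t, 0::real, w' * t) = t *\<^sub>R (1,0,0) + (w' * t) *\<^sub>R (0,0,1)" by simp
    show "DF (x,z,w x) (t, 0, w' * t) = (DF (x,z,w x) (1,0,0) + DF (x,z,w x) (0,0,1) * w') * t"
      unfolding e by (simp only: blinfun.add_right blinfun.scaleR_right) (simp add: algebra_simps)
  qed
  ultimately show ?thesis unfolding has_field_derivative_def by simp
qed

lemma chain3_z:
  fixes F :: "real\<times>real\<times>real \<Rightarrow> real" and DF :: "real\<times>real\<times>real \<Rightarrow> (real\<times>real\<times>real) \<Rightarrow>\<^sub>L real"
  assumes dF: "\<forall>q\<in>K. (F has_derivative blinfun_apply (DF q)) (at q within K)"
    and img: "\<forall>z'\<in>S. (x, k z', w) \<in> K" and z: "z \<in> S"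
    and dk: "(k has_real_derivative k') (at z within S)"
  shows "((\<lambda>z'. F (x, k z', w)) has_real_derivative (DF (x,k z,w) (0,1,0) * k')) (at z within S)"
proof -
  have dg: "((\<lambda>z'. (x, k z', w)) has_derivative (\<lambda>t. (0, k' * t, 0))) (at z within S)"
    using dk unfolding has_field_derivative_def
    by (intro has_derivative_Pair has_derivative_ident has_derivative_const) auto
  have "((\<lambda>z'. F (x, k z', w)) has_derivative (\<lambda>t. DF (x,k z,w) (0, k' * t, 0))) (at z within S)"
    by (rule has_derivative_in_compose2[where t=K and g=F and g'="\<lambda>q. blinfun_apply (DF q)", OF _ _ z dg])
       (use dF img in auto)
  moreover have "(\<lambda>t. DF (x,k z,w) (0, k' * t, 0)) = (\<lambda>t. (DF (x,k z,w) (0,1,0) * k') * t)"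
  proof
    fix t
    have e: "(0::real, k' * t, 0::real) = (k' * t) *\<^sub>R (0,1,0)" by simp
    show "DF (x,k z,w) (0, k' * t, 0) = (DF (x,k z,w) (0,1,0) * k') * t"
      unfolding e by (simp only: blinfun.scaleR_right) (simp add: algebra_simps)
  qed
  ultimately show ?thesis unfolding has_field_derivative_def by simp
qed

lemma C2_on_D:
  assumes "C2_on K f Df"
  shows "\<forall>p\<in>K. (f has_derivative blinfun_apply (Df p)) (at p within K)"
    and "continuous_on K f" and "continuous_on K Df"
proof -
  show d: "\<forall>p\<in>K. (f has_derivative blinfun_apply (Df p)) (at p within K)"
    using assms unfolding C2_on_def by blast
  show "continuous_on K f" using d by (intro has_derivative_continuous_on) auto
  from assms obtain D2f where "\<forall>p\<in>K. (Df has_derivative blinfun_apply (D2f p)) (at p within K)"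
    unfolding C2_on_def by blast
  then show "continuous_on K Df" by (intro has_derivative_continuous_on) auto
qed



locale ctx =
  fixes L H m :: real and \<sigma> :: "real\<times>real \<Rightarrow> real"
    and hb h :: "real\<times>real\<times>real \<Rightarrow> real"
    and Dhb Dh :: "real\<times>real\<times>real \<Rightarrow> (real\<times>real\<times>real) \<Rightarrow>\<^sub>L real"
  assumes L_pos: "L > 0" and H_pos: "H > 0" and m_pos: "m > 0"
    and sigma_cont: "continuous_on ({-L..L} \<times> {-H-1..-H}) \<sigma>"
    and sigma_pos: "\<forall>p \<in> {-L..L} \<times> {-H-1..-H}. \<sigma> p > 0"
    and hb_C2: "C2_on ({-L..L} \<times> {-H-1..-H} \<times> {-H..}) hb Dhb"
    and h_C2: "C2_on ({-L..L} \<times> {-H..} \<times> {-H..}) h Dh"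
    and interface_val: "\<forall>x\<in>{-L..L}. \<forall>w\<ge>-H. hb (x, -H, w) = h (x, -H, w)"
    and hb_bound1: "\<forall>x\<in>{-L..L}. \<forall>z\<in>{-H-1..-H}. \<forall>w\<ge>-H.
          \<bar>Dhb (x, z, w) (1, 0, 0)\<bar> + \<bar>Dhb (x, z, w) (0, 1, 0)\<bar> \<le> sqrt (m * (1 + w\<^sup>2))"
    and hb_bound2: "\<forall>x\<in>{-L..L}. \<forall>z\<in>{-H-1..-H}. \<forall>w\<ge>-H.
          \<bar>Dhb (x, z, w) (0, 0, 1)\<bar> \<le> sqrt m"
    and h_bound1: "\<forall>x\<in>{-L..L}. \<forall>z\<ge>-H. \<forall>w>-H.
          \<bar>Dh (x, z, w) (1, 0, 0)\<bar> + \<bar>Dh (x, z, w) (0, 1, 0)\<bar> \<le> sqrt (m * (1 + w\<^sup>2) / (H + w))"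
    and h_bound2: "\<forall>x\<in>{-L..L}. \<forall>z\<ge>-H. \<forall>w>-H.
          \<bar>Dh (x, z, w) (0, 0, 1)\<bar> \<le> sqrt (m / (H + w))"
begin

abbreviation "Kb \<equiv> {-L..L} \<times> {-H-1..-H} \<times> {-H..}"
abbreviation "Kh \<equiv> {-L..L} \<times> {-H..} \<times> {-H..}"
abbreviation "Ks \<equiv> {-L..L} \<times> {-H-1..-H}"
abbreviation "Kc \<equiv> {-L..L} \<times> {-H..-H+1} \<times> {-H..-H+1}"

lemma hb_der: "\<forall>p\<in>Kb. (hb has_derivative blinfun_apply (Dhb p)) (at p within Kb)"
  and hb_cont: "continuous_on Kb hb" and Dhb_cont: "continuous_on Kb Dhb"
  using C2_on_D[OF hb_C2] by auto

lemma h_der: "\<forall>p\<in>Kh. (h has_derivative blinfun_apply (Dh p)) (at p within Kh)"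
  and h_cont: "continuous_on Kh h" and Dh_cont: "continuous_on Kh Dh"
  using C2_on_D[OF h_C2] by auto

definition "Sm = 1 + Sup ((\<lambda>p. \<bar>\<sigma> p\<bar>) ` Ks)"
definition "Bc = 1 + Sup ((\<lambda>q. norm (Dh q)) ` Kc)"

lemma Sm: "Sm \<ge> 1" "\<forall>p\<in>Ks. \<sigma> p \<le> Sm"
proof -
  have cK: "compact Ks" by (intro compact_Times compact_Icc)
  have "compact ((\<lambda>p. \<bar>\<sigma> p\<bar>) ` Ks)"
    by (intro compact_continuous_image continuous_intros sigma_cont cK)
  then have bd: "bdd_above ((\<lambda>p. \<bar>\<sigma> p\<bar>) ` Ks)" by (meson bounded_imp_bdd_above compact_imp_bounded)
  have ne: "Ks \<noteq> {}" using L_pos by auto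
  have "Sup ((\<lambda>p. \<bar>\<sigma> p\<bar>) ` Ks) \<ge> 0"
  proof -
    obtain p where "p \<in> Ks" using ne by blast
    then show ?thesis using cSUP_upper[OF _ bd, of p] by (meson abs_ge_zero order_trans)
  qed
  then show "Sm \<ge> 1" unfolding Sm_def by simp
  show "\<forall>p\<in>Ks. \<sigma> p \<le> Sm"
  proof
    fix p assume "p \<in> Ks"
    then have "\<bar>\<sigma> p\<bar> \<le> Sup ((\<lambda>p. \<bar>\<sigma> p\<bar>) ` Ks)" using cSUP_upper[OF _ bd] by blast
    then show "\<sigma> p \<le> Sm" unfolding Sm_def by simp
  qed
qed

lemma Bc: "Bc \<ge> 1" "\<forall>q\<in>Kc. norm (Dh q) \<le> Bc"
proof -
  have cK: "compact Kc" by (intro compact_Times compact_Icc)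
  have sub: "Kc \<subseteq> Kh" by auto
  have "compact ((\<lambda>q. norm (Dh q)) ` Kc)"
    by (intro compact_continuous_image continuous_intros continuous_on_subset[OF Dh_cont sub] cK)
  then have bd: "bdd_above ((\<lambda>q. norm (Dh q)) ` Kc)" by (meson bounded_imp_bdd_above compact_imp_bounded)
  have ne: "Kc \<noteq> {}" using L_pos by auto
  have "Sup ((\<lambda>q. norm (Dh q)) ` Kc) \<ge> 0"
  proof -
    obtain p where "p \<in> Kc" using ne by blast
    then show ?thesis using cSUP_upper[OF _ bd, of p] by (meson norm_ge_zero order_trans)
  qed
  then show "Bc \<ge> 1" unfolding Bc_def by simp
  show "\<forall>q\<in>Kc. norm (Dh q) \<le> Bc"
  proof
    fix p assume "p \<in> Kc"
    then have "norm (Dh p) \<le> Sup ((\<lambda>q. norm (Dh q)) ` Kc)" using cSUP_upper[OF _ bd] by blast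
    then show "norm (Dh p) \<le> Bc" unfolding Bc_def by simp
  qed
qed

end

locale ctxu = ctx +
  fixes u u1 u2 :: "real \<Rightarrow> real" and \<delta> :: real
  assumes S0: "barS0 L H u u1 u2" and d_pos: "0 < \<delta>" and d_lt: "\<delta> < 1"
begin

lemma u_der: "\<forall>x\<in>{-L..L}. (u has_real_derivative u1 x) (at x within {-L..L})"
  and u_ge: "\<forall>x\<in>{-L..L}. u x \<ge> -H"
  and u_ends: "u (-L) = 0" "u L = 0"
  and u1_eq: "\<forall>x\<in>{-L..L}. u1 x = u1 (-L) + integral {-L..x} u2"
  and u2_L2: "L2_on {-L..L} u2"
  using S0 unfolding barS0_def H2_repr_def by auto

lemma u_cont: "continuous_on {-L..L} u"
  using u_der by (intro has_derivative_continuous_on) (auto simp: has_field_derivative_def)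

lemma u2_int: "u2 integrable_on {-L..L}"
proof -
  have L: "{-L..L} \<in> sets lebesgue" by simp
  have "u2 \<in> borel_measurable (lebesgue_on {-L..L})"
    using u2_L2 measurable_on_iff_borel_measurable[OF L] unfolding L2_on_def by blast
  moreover have "(\<lambda>x. (1 + (norm (u2 x))\<^sup>2) / 2) integrable_on {-L..L}"
  proof -
    have "(\<lambda>p. (norm (u2 p))\<^sup>2) integrable_on {-L..L}" using u2_L2 unfolding L2_on_def by blast
    then have "(\<lambda>x. 1 + (norm (u2 x))\<^sup>2) integrable_on {-L..L}"
      by (intro integrable_add integrable_on_const) auto
    then show ?thesis by simp
  qed
  moreover have "norm (u2 x) \<le> (1 + (norm (u2 x))\<^sup>2) / 2" for x
  proof -
    have "0 \<le> (1 - norm (u2 x))\<^sup>2" by simp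
    then show ?thesis unfolding power2_diff by simp
  qed
  ultimately show ?thesis using measurable_bounded_by_integrable_imp_integrable L by blast
qed

lemma u1_cont: "continuous_on {-L..L} u1"
proof -
  have "continuous_on {-L..L} (\<lambda>x. u1 (-L) + integral {-L..x} u2)"
    by (intro continuous_intros indefinite_integral_continuous_1 u2_int)
  then show ?thesis using u1_eq continuous_on_eq by (metis (no_types, lifting))
qed

end



context ctxu begin

definition "ze z = -H + (z + H) / \<delta>"
definition "p1 p = (fst p, ze (snd p), u (fst p))"
definition "p2 p = (fst p, snd p, u (fst p))"
definition "b1 p = hb (p1 p)"
definition "b2 p = h (p2 p)"
definition "Gb p = (Dhb (p1 p) (1,0,0) + Dhb (p1 p) (0,0,1) * u1 (fst p), Dhb (p1 p) (0,1,0) / \<delta>)"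
definition "Gh p = (Dh (p2 p) (1,0,0) + Dh (p2 p) (0,0,1) * u1 (fst p), Dh (p2 p) (0,1,0))"
definition "G p = (if snd p < -H then Gb p else Gh p)"

abbreviation "Om \<equiv> Omega_d L H \<delta> u"
abbreviation "R1 \<equiv> cbox (-L, -H-\<delta>) (L, -H)"
abbreviation "R2 M \<equiv> cbox (-L, -H) (L, M)"

definition "UB M \<longleftrightarrow> M \<ge> 0 \<and> (\<forall>x\<in>{-L..L}. \<bar>u x\<bar> \<le> M)"

lemma exM: "\<exists>M. UB M"
proof -
  have "compact (u ` {-L..L})" by (intro compact_continuous_image u_cont compact_Icc)
  then obtain B where "\<forall>y\<in>u ` {-L..L}. norm y \<le> B" using compact_imp_bounded bounded_iff by metis
  then have "UB (max B 0)" unfolding UB_def by auto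
  then show ?thesis by blast
qed

lemma hud_eq: "h_ud H \<delta> hb h u p = (if snd p < -H then b1 p else b2 p)"
  by (cases p) (simp add: h_ud_def b1_def b2_def p1_def p2_def ze_def)

lemma ze_in: "z \<in> {-H-\<delta>..-H} \<Longrightarrow> ze z \<in> {-H-1..-H}"
proof -
  assume z: "z \<in> {-H-\<delta>..-H}"
  then have "-\<delta> \<le> z + H" "z + H \<le> 0" by auto
  then have "-1 \<le> (z + H) / \<delta>" "(z + H) / \<delta> \<le> 0"
    using d_pos by (auto simp: field_simps divide_nonpos_pos)
  then show ?thesis unfolding ze_def by auto
qed

lemma p1_in: "p \<in> R1 \<Longrightarrow> p1 p \<in> Kb"
  using ze_in u_ge by (cases p) (auto simp: p1_def cbox_Pair_iff)

lemma p2_in: "fst p \<in> {-L..L} \<Longrightarrow> snd p \<ge> -H \<Longrightarrow> p2 p \<in> Kh"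
  using u_ge by (cases p) (auto simp: p2_def)

lemma uf_cont: "continuous_on (cbox (-L, a) (L, b)) (\<lambda>p. u (fst p))"
  by (rule continuous_on_compose2[OF u_cont]) (auto intro!: continuous_intros simp: cbox_Pair_iff)

lemma u1f_cont: "continuous_on (cbox (-L, a) (L, b)) (\<lambda>p. u1 (fst p))"
  by (rule continuous_on_compose2[OF u1_cont]) (auto intro!: continuous_intros simp: cbox_Pair_iff)

lemma p1_cont: "continuous_on R1 p1"
  unfolding p1_def ze_def using d_pos by (intro continuous_intros uf_cont) auto

lemma p2_cont: "continuous_on (R2 M) p2"
  unfolding p2_def by (intro continuous_intros uf_cont)

lemma p1_img: "p1 ` R1 \<subseteq> Kb"
  using p1_in by blast

lemma b1_cont: "continuous_on R1 b1"
  unfolding b1_def by (rule continuous_on_compose2[OF hb_cont p1_cont p1_img])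

lemma p2_img: "p2 ` (R2 M) \<subseteq> Kh"
  using p2_in by (force simp: cbox_Pair_iff)

lemma b2_cont: "continuous_on (R2 M) b2"
  unfolding b2_def by (rule continuous_on_compose2[OF h_cont p2_cont p2_img])

lemma Dhb1_cont: "continuous_on R1 (\<lambda>p. Dhb (p1 p) v)"
proof -
  have "continuous_on R1 (\<lambda>p. Dhb (p1 p))"
    by (rule continuous_on_compose2[OF Dhb_cont p1_cont p1_img])
  then show ?thesis by (intro blinfun.continuous_on continuous_intros)
qed

lemma Dh2_cont: "continuous_on (R2 M) (\<lambda>p. Dh (p2 p) v)"
proof -
  have "continuous_on (R2 M) (\<lambda>p. Dh (p2 p))"
    by (rule continuous_on_compose2[OF Dh_cont p2_cont p2_img])
  then show ?thesis by (intro blinfun.continuous_on continuous_intros)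
qed

lemma Gb_cont: "continuous_on R1 Gb"
  unfolding Gb_def by (intro continuous_on_Pair continuous_on_add continuous_on_mult continuous_on_divide Dhb1_cont u1f_cont continuous_on_const) (use d_pos in auto)

lemma Gh_cont: "continuous_on (R2 M) Gh"
  unfolding Gh_def by (intro continuous_on_Pair continuous_on_add continuous_on_mult Dh2_cont u1f_cont)

lemma Om_open: "open Om"
proof -
  let ?S = "{-L<..<L} \<times> (UNIV::real set)"
  have c: "continuous_on ?S (\<lambda>p. u (fst p) - snd p)"
    by (intro continuous_intros continuous_on_compose2[OF u_cont]) auto
  have "open ((\<lambda>p. u (fst p) - snd p) -` {0<..} \<inter> ?S)"
  proof -
    have oS: "open ?S" by (intro open_Times) auto
    show ?thesis using continuous_on_open_vimage[OF oS] c open_greaterThan by blast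
  qed
  moreover have "Om = ((\<lambda>p. u (fst p) - snd p) -` {0<..} \<inter> ?S) \<inter> {p. snd p > -H-\<delta>}"
    by (auto simp: Omega_d_def)
  ultimately show ?thesis by (auto intro!: open_Int open_Collect_less continuous_intros)
qed

lemma Om_sub1: "p \<in> Om \<Longrightarrow> snd p < -H \<Longrightarrow> p \<in> R1"
  unfolding Omega_d_def by (auto simp: cbox_Pair_iff)


lemma Om_sub2: "UB M \<Longrightarrow> p \<in> Om \<Longrightarrow> snd p \<ge> -H \<Longrightarrow> p \<in> R2 M"
proof -
  assume M: "UB M" and p: "p \<in> Om" and z: "snd p \<ge> -H"
  obtain x z where pe: "p = (x,z)" by (cases p)
  have x: "-L < x" "x < L" "z < u x" using p pe by (auto simp: Omega_d_def)
  have "\<bar>u x\<bar> \<le> M" using M x unfolding UB_def by auto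
  then show "p \<in> R2 M" using x z pe by (auto simp: cbox_Pair_iff)
qed

lemma Om_sub: "UB M \<Longrightarrow> Om \<subseteq> R1 \<union> R2 M"
  using Om_sub2 Om_sub1 by (meson UnI1 UnI2 not_le subsetI)

lemma Om_bounded: "bounded Om"
proof -
  obtain M where "UB M" using exM by blast
  then show ?thesis using Om_sub bounded_subset by (metis bounded_Un bounded_cbox)
qed

end


lemma test_facts:
  assumes tf: "test_fn \<Omega> \<phi>"
  obtains \<phi>x \<phi>z where "\<And>p. (\<phi> has_derivative (\<lambda>v. fst v * \<phi>x p + snd v * \<phi>z p)) (at p)"
    "continuous_on UNIV \<phi>" "continuous_on UNIV \<phi>x" "continuous_on UNIV \<phi>z"
    "\<And>p. grad2 \<phi> p = (\<phi>x p, \<phi>z p)"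
    "\<And>p. p \<notin> \<Omega> \<Longrightarrow> \<phi> p = 0 \<and> \<phi>x p = 0 \<and> \<phi>z p = 0"
proof -
  from tf obtain S where S: "\<phi> \<in> S" and Sd: "\<forall>g\<in>S. \<exists>g1\<in>S. \<exists>g2\<in>S. \<forall>p.
        (g has_derivative (\<lambda>v. fst v * g1 p + snd v * g2 p)) (at p)"
    and cp: "compact (closure {p. \<phi> p \<noteq> 0})" and sub: "closure {p. \<phi> p \<noteq> 0} \<subseteq> \<Omega>"
    unfolding test_fn_def smooth2_def by blast
  have cS: "continuous_on UNIV g" if gS: "g \<in> S" for g
  proof -
    have "\<exists>g1 g2. \<forall>p. (g has_derivative (\<lambda>v. fst v * g1 p + snd v * g2 p)) (at p)"
      using Sd gS by blast
    then obtain g1 g2 where "\<forall>p. (g has_derivative (\<lambda>v. fst v * g1 p + snd v * g2 p)) (at p)"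
      by blast
    then show ?thesis by (intro has_derivative_continuous_on) auto
  qed
  obtain \<phi>x \<phi>z where xz: "\<phi>x \<in> S" "\<phi>z \<in> S"
    and d: "\<And>p. (\<phi> has_derivative (\<lambda>v. fst v * \<phi>x p + snd v * \<phi>z p)) (at p)"
    using Sd S by blast
  have gr: "grad2 \<phi> p = (\<phi>x p, \<phi>z p)" for p
  proof -
    have "frechet_derivative \<phi> (at p) = (\<lambda>v. fst v * \<phi>x p + snd v * \<phi>z p)"
      using frechet_derivative_at[OF d[of p]] by simp
    then show ?thesis unfolding grad2_def by simp
  qed
  have z: "\<phi> p = 0 \<and> \<phi>x p = 0 \<and> \<phi>z p = 0" if p: "p \<notin> \<Omega>" for p
  proof -
    let ?K = "closure {p. \<phi> p \<noteq> 0}"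
    have pK: "p \<in> - ?K" using p sub by auto
    have cs: "{p. \<phi> p \<noteq> 0} \<subseteq> ?K" by (rule closure_subset)
    have z0: "\<phi> q = 0" if qK: "q \<in> - ?K" for q using qK cs by auto
    have "((\<lambda>_. 0::real) has_derivative (\<lambda>v. 0)) (at p)" by simp
    then have "(\<phi> has_derivative (\<lambda>v. 0)) (at p)"
    proof (rule has_derivative_transform_within_open[OF _ _ pK])
      show "open (- ?K)" by (rule open_Compl) (rule closed_closure)
      show "\<And>x. x \<in> - ?K \<Longrightarrow> 0 = \<phi> x" by (rule sym, rule z0)
    qed
    then have e: "(\<lambda>v. fst v * \<phi>x p + snd v * \<phi>z p) = (\<lambda>v. 0)"
      by (rule has_derivative_unique[OF d[of p]])
    have "\<phi>x p = 0" using fun_cong[OF e, of "(1,0)"] by simp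
    moreover have "\<phi>z p = 0" using fun_cong[OF e, of "(0,1)"] by simp
    ultimately show ?thesis using z0[OF pK] by blast
  qed
  show ?thesis by (rule that[OF d cS[OF S] cS[OF xz(1)] cS[OF xz(2)] gr z])
qed

lemma phi_dx:
  assumes "\<And>p. (\<phi> has_derivative (\<lambda>v. fst v * \<phi>x p + snd v * \<phi>z p)) (at p)"
  shows "((\<lambda>x'. \<phi> (x',z)) has_real_derivative \<phi>x (x,z)) (at x within S)"
proof -
  have "((\<lambda>x'. (x',z)) has_derivative (\<lambda>t. (t,0))) (at x within S)"
    by (intro has_derivative_Pair has_derivative_ident has_derivative_const)
  from has_derivative_compose[OF this assms]
  have "((\<lambda>x'. \<phi> (x',z)) has_derivative (\<lambda>t. t * \<phi>x (x,z))) (at x within S)" by simp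
  moreover have "(\<lambda>t. t * \<phi>x (x,z)) = (*) (\<phi>x (x,z))" by (auto simp: fun_eq_iff)
  ultimately show ?thesis unfolding has_field_derivative_def by simp
qed

lemma phi_dz:
  assumes "\<And>p. (\<phi> has_derivative (\<lambda>v. fst v * \<phi>x p + snd v * \<phi>z p)) (at p)"
  shows "((\<lambda>z'. \<phi> (x,z')) has_real_derivative \<phi>z (x,z)) (at z within S)"
proof -
  have "((\<lambda>z'. (x,z')) has_derivative (\<lambda>t. (0,t))) (at z within S)"
    by (intro has_derivative_Pair has_derivative_ident has_derivative_const)
  from has_derivative_compose[OF this assms]
  have "((\<lambda>z'. \<phi> (x,z')) has_derivative (\<lambda>t. t * \<phi>z (x,z))) (at z within S)" by simp
  moreover have "(\<lambda>t. t * \<phi>z (x,z)) = (*) (\<phi>z (x,z))" by (auto simp: fun_eq_iff)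
  ultimately show ?thesis unfolding has_field_derivative_def by simp
qed

context ctxu begin

lemma b1_dx: "x \<in> {-L..L} \<Longrightarrow> z \<in> {-H-\<delta>..-H} \<Longrightarrow>
   ((\<lambda>x'. b1 (x',z)) has_real_derivative fst (Gb (x,z))) (at x within {-L..L})"
  unfolding b1_def p1_def Gb_def fst_conv snd_conv
  by (rule chain3_x[OF hb_der]) (use ze_in u_ge u_der in auto)

lemma b2_dx: "x \<in> {-L..L} \<Longrightarrow> z \<ge> -H \<Longrightarrow>
   ((\<lambda>x'. b2 (x',z)) has_real_derivative fst (Gh (x,z))) (at x within {-L..L})"
  unfolding b2_def p2_def Gh_def fst_conv snd_conv
  by (rule chain3_x[OF h_der]) (use u_ge u_der in auto)

lemma ze_der: "(ze has_real_derivative (1/\<delta>)) (at z within S)"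
  unfolding ze_def using d_pos by (auto intro!: derivative_eq_intros)

lemma b1_dz: "x \<in> {-L..L} \<Longrightarrow> z \<in> {-H-\<delta>..-H} \<Longrightarrow>
   ((\<lambda>z'. b1 (x,z')) has_real_derivative snd (Gb (x,z))) (at z within {-H-\<delta>..-H})"
proof -
  assume x: "x \<in> {-L..L}" and z: "z \<in> {-H-\<delta>..-H}"
  have "((\<lambda>z'. hb (x, ze z', u x)) has_real_derivative (Dhb (x, ze z, u x) (0,1,0) * (1/\<delta>))) (at z within {-H-\<delta>..-H})"
    by (rule chain3_z[OF hb_der _ z ze_der]) (use ze_in u_ge x in auto)
  then show ?thesis unfolding b1_def p1_def Gb_def by simp
qed

lemma b2_dz: "x \<in> {-L..L} \<Longrightarrow> z \<in> {-H..M} \<Longrightarrow>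
   ((\<lambda>z'. b2 (x,z')) has_real_derivative snd (Gh (x,z))) (at z within {-H..M})"
proof -
  assume x: "x \<in> {-L..L}" and z: "z \<in> {-H..M}"
  have "((\<lambda>z'. h (x, (\<lambda>t. t) z', u x)) has_real_derivative (Dh (x, (\<lambda>t. t) z, u x) (0,1,0) * 1)) (at z within {-H..M})"
    by (rule chain3_z[OF h_der _ z]) (use u_ge x in \<open>auto intro!: derivative_eq_intros\<close>)
  then show ?thesis unfolding b2_def p2_def Gh_def by simp
qed

end


context ctxu begin

lemma notin_Om_L: "(L, z) \<notin> Om" "(-L, z) \<notin> Om" "(x, -H-\<delta>) \<notin> Om"
  by (auto simp: Omega_d_def)

lemma notin_Om_M: "UB M \<Longrightarrow> x \<in> {-L..L} \<Longrightarrow> (x, M) \<notin> Om"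
proof
  assume M: "UB M" and x: "x \<in> {-L..L}" and "(x, M) \<in> Om"
  then have "M < u x" by (simp add: Omega_d_def)
  moreover have "\<bar>u x\<bar> \<le> M" using M x unfolding UB_def by blast
  ultimately show False by simp
qed

lemma b_interface: "x \<in> {-L..L} \<Longrightarrow> b1 (x,-H) = b2 (x,-H)"
  using interface_val u_ge by (simp add: b1_def b2_def p1_def p2_def ze_def)

lemma weak_x:
  assumes tf: "test_fn Om \<phi>"
  shows "integral Om (\<lambda>p. h_ud H \<delta> hb h u p * fst (grad2 \<phi> p)) = - integral Om (\<lambda>p. fst (G p) * \<phi> p)"
proof -
  obtain M where M: "UB M" using exM by blast
  have M0: "-H \<le> M" using M H_pos unfolding UB_def by auto
  obtain \<phi>x \<phi>z where d: "\<And>p. (\<phi> has_derivative (\<lambda>v. fst v * \<phi>x p + snd v * \<phi>z p)) (at p)"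
    and c\<phi>: "continuous_on UNIV \<phi>" and cx: "continuous_on UNIV \<phi>x" and cz: "continuous_on UNIV \<phi>z"
    and gr: "\<And>p. grad2 \<phi> p = (\<phi>x p, \<phi>z p)"
    and z: "\<And>p. p \<notin> Om \<Longrightarrow> \<phi> p = 0 \<and> \<phi>x p = 0 \<and> \<phi>z p = 0"
    by (rule test_facts[OF tf]) blast
  have sub: "Om \<subseteq> R1 \<union> R2 M" by (rule Om_sub[OF M])
  have cx': "continuous_on S \<phi>x" for S using continuous_on_subset[OF cx] by blast
  have cz': "continuous_on S \<phi>z" for S using continuous_on_subset[OF cz] by blast
  have c\<phi>': "continuous_on S \<phi>" for S using continuous_on_subset[OF c\<phi>] by blast
  let ?hu = "h_ud H \<delta> hb h u"
  have IL: "((\<lambda>p. ?hu p * \<phi>x p) has_integral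
      (integral R1 (\<lambda>p. b1 p * \<phi>x p) + integral (R2 M) (\<lambda>p. b2 p * \<phi>x p))) Om"
  proof -
    have "((\<lambda>p. if p \<in> Om then ?hu p * \<phi>x p else 0) has_integral
      (integral R1 (\<lambda>p. b1 p * \<phi>x p) + integral (R2 M) (\<lambda>p. b2 p * \<phi>x p))) (R1 \<union> R2 M)"
    proof (rule split_int)
      show "continuous_on R1 (\<lambda>p. b1 p * \<phi>x p)" by (intro continuous_intros b1_cont cx')
      show "continuous_on (R2 M) (\<lambda>p. b2 p * \<phi>x p)" by (intro continuous_intros b2_cont cx')
      show "\<forall>p\<in>R1. snd p < -H \<longrightarrow> (if p \<in> Om then ?hu p * \<phi>x p else 0) = b1 p * \<phi>x p"
        using z by (auto simp: hud_eq)
      show "\<forall>p\<in>R2 M. snd p > -H \<longrightarrow> (if p \<in> Om then ?hu p * \<phi>x p else 0) = b2 p * \<phi>x p"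
        using z by (auto simp: hud_eq)
    qed
    then show ?thesis using has_integral_restrict[OF sub] by blast
  qed
  have IR: "((\<lambda>p. fst (G p) * \<phi> p) has_integral
      (integral R1 (\<lambda>p. fst (Gb p) * \<phi> p) + integral (R2 M) (\<lambda>p. fst (Gh p) * \<phi> p))) Om"
  proof -
    have "((\<lambda>p. if p \<in> Om then fst (G p) * \<phi> p else 0) has_integral
      (integral R1 (\<lambda>p. fst (Gb p) * \<phi> p) + integral (R2 M) (\<lambda>p. fst (Gh p) * \<phi> p))) (R1 \<union> R2 M)"
    proof (rule split_int)
      show "continuous_on R1 (\<lambda>p. fst (Gb p) * \<phi> p)" by (intro continuous_intros Gb_cont c\<phi>')
      show "continuous_on (R2 M) (\<lambda>p. fst (Gh p) * \<phi> p)" by (intro continuous_intros Gh_cont c\<phi>')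
      show "\<forall>p\<in>R1. snd p < -H \<longrightarrow> (if p \<in> Om then fst (G p) * \<phi> p else 0) = fst (Gb p) * \<phi> p"
        using z by (auto simp: G_def)
      show "\<forall>p\<in>R2 M. snd p > -H \<longrightarrow> (if p \<in> Om then fst (G p) * \<phi> p else 0) = fst (Gh p) * \<phi> p"
        using z by (auto simp: G_def)
    qed
    then show ?thesis using has_integral_restrict[OF sub] by blast
  qed
  have Z1: "integral R1 (\<lambda>p. b1 p * \<phi>x p + fst (Gb p) * \<phi> p) = 0"
  proof -
    have "integral R1 (\<lambda>p. b1 p * \<phi>x p + fst (Gb p) * \<phi> p)
        = integral {-H-\<delta>..-H} (\<lambda>z. b1 (L,z) * \<phi> (L,z) - b1 (-L,z) * \<phi> (-L,z))"
    proof (rule ftc_box_x[where Q="\<lambda>p. b1 p * \<phi> p"])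
      show "continuous_on R1 (\<lambda>p. b1 p * \<phi>x p + fst (Gb p) * \<phi> p)"
        by (intro continuous_intros b1_cont Gb_cont cx' c\<phi>')
      show "-L \<le> L" using L_pos by simp
      fix x z assume x: "x \<in> {-L..L}" and zz: "z \<in> {-H-\<delta>..-H}"
      show "((\<lambda>x'. b1 (x',z) * \<phi> (x',z)) has_real_derivative b1 (x,z) * \<phi>x (x,z) + fst (Gb (x,z)) * \<phi> (x,z))
          (at x within {-L..L})"
        by (rule DERIV_mult'[OF b1_dx[OF x zz] phi_dx[OF d]])
    qed
    also have "\<dots> = 0" using z notin_Om_L by simp
    finally show ?thesis .
  qed
  have Z2: "integral (R2 M) (\<lambda>p. b2 p * \<phi>x p + fst (Gh p) * \<phi> p) = 0"
  proof -
    have "integral (R2 M) (\<lambda>p. b2 p * \<phi>x p + fst (Gh p) * \<phi> p)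
        = integral {-H..M} (\<lambda>z. b2 (L,z) * \<phi> (L,z) - b2 (-L,z) * \<phi> (-L,z))"
    proof (rule ftc_box_x[where Q="\<lambda>p. b2 p * \<phi> p"])
      show "continuous_on (R2 M) (\<lambda>p. b2 p * \<phi>x p + fst (Gh p) * \<phi> p)"
        by (intro continuous_intros b2_cont Gh_cont cx' c\<phi>')
      show "-L \<le> L" using L_pos by simp
      fix x z assume x: "x \<in> {-L..L}" and zz: "z \<in> {-H..M}"
      show "((\<lambda>x'. b2 (x',z) * \<phi> (x',z)) has_real_derivative b2 (x,z) * \<phi>x (x,z) + fst (Gh (x,z)) * \<phi> (x,z))
          (at x within {-L..L})"
        by (rule DERIV_mult'[OF b2_dx phi_dx[OF d]]) (use x zz in auto)
    qed
    also have "\<dots> = 0" using z notin_Om_L by simp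
    finally show ?thesis .
  qed
  have A1: "integral R1 (\<lambda>p. b1 p * \<phi>x p + fst (Gb p) * \<phi> p)
      = integral R1 (\<lambda>p. b1 p * \<phi>x p) + integral R1 (\<lambda>p. fst (Gb p) * \<phi> p)"
    by (intro integral_add integrable_continuous continuous_intros b1_cont Gb_cont cx' c\<phi>')
  have A2: "integral (R2 M) (\<lambda>p. b2 p * \<phi>x p + fst (Gh p) * \<phi> p)
      = integral (R2 M) (\<lambda>p. b2 p * \<phi>x p) + integral (R2 M) (\<lambda>p. fst (Gh p) * \<phi> p)"
    by (intro integral_add integrable_continuous continuous_intros b2_cont Gh_cont cx' c\<phi>')
  have "integral Om (\<lambda>p. ?hu p * fst (grad2 \<phi> p)) = integral Om (\<lambda>p. ?hu p * \<phi>x p)"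
    by (simp add: gr)
  also have "\<dots> = integral R1 (\<lambda>p. b1 p * \<phi>x p) + integral (R2 M) (\<lambda>p. b2 p * \<phi>x p)"
    by (rule integral_unique[OF IL])
  also have "\<dots> = - (integral R1 (\<lambda>p. fst (Gb p) * \<phi> p) + integral (R2 M) (\<lambda>p. fst (Gh p) * \<phi> p))"
    using Z1 Z2 A1 A2 by simp
  also have "\<dots> = - integral Om (\<lambda>p. fst (G p) * \<phi> p)"
    by (simp add: integral_unique[OF IR])
  finally show ?thesis .
qed

lemma weak_z:
  assumes tf: "test_fn Om \<phi>"
  shows "integral Om (\<lambda>p. h_ud H \<delta> hb h u p * snd (grad2 \<phi> p)) = - integral Om (\<lambda>p. snd (G p) * \<phi> p)"
proof -
  obtain M where M: "UB M" using exM by blast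
  have M0: "-H \<le> M" using M H_pos unfolding UB_def by auto
  obtain \<phi>x \<phi>z where d: "\<And>p. (\<phi> has_derivative (\<lambda>v. fst v * \<phi>x p + snd v * \<phi>z p)) (at p)"
    and c\<phi>: "continuous_on UNIV \<phi>" and cx: "continuous_on UNIV \<phi>x" and cz: "continuous_on UNIV \<phi>z"
    and gr: "\<And>p. grad2 \<phi> p = (\<phi>x p, \<phi>z p)"
    and z: "\<And>p. p \<notin> Om \<Longrightarrow> \<phi> p = 0 \<and> \<phi>x p = 0 \<and> \<phi>z p = 0"
    by (rule test_facts[OF tf]) blast
  have sub: "Om \<subseteq> R1 \<union> R2 M" by (rule Om_sub[OF M])
  have cx': "continuous_on S \<phi>x" for S using continuous_on_subset[OF cx] by blast
  have cz': "continuous_on S \<phi>z" for S using continuous_on_subset[OF cz] by blast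
  have c\<phi>': "continuous_on S \<phi>" for S using continuous_on_subset[OF c\<phi>] by blast
  let ?hu = "h_ud H \<delta> hb h u"
  have IL: "((\<lambda>p. ?hu p * \<phi>z p) has_integral
      (integral R1 (\<lambda>p. b1 p * \<phi>z p) + integral (R2 M) (\<lambda>p. b2 p * \<phi>z p))) Om"
  proof -
    have "((\<lambda>p. if p \<in> Om then ?hu p * \<phi>z p else 0) has_integral
      (integral R1 (\<lambda>p. b1 p * \<phi>z p) + integral (R2 M) (\<lambda>p. b2 p * \<phi>z p))) (R1 \<union> R2 M)"
    proof (rule split_int)
      show "continuous_on R1 (\<lambda>p. b1 p * \<phi>z p)" by (intro continuous_intros b1_cont cz')
      show "continuous_on (R2 M) (\<lambda>p. b2 p * \<phi>z p)" by (intro continuous_intros b2_cont cz')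
      show "\<forall>p\<in>R1. snd p < -H \<longrightarrow> (if p \<in> Om then ?hu p * \<phi>z p else 0) = b1 p * \<phi>z p"
        using z by (auto simp: hud_eq)
      show "\<forall>p\<in>R2 M. snd p > -H \<longrightarrow> (if p \<in> Om then ?hu p * \<phi>z p else 0) = b2 p * \<phi>z p"
        using z by (auto simp: hud_eq)
    qed
    then show ?thesis using has_integral_restrict[OF sub] by blast
  qed
  have IR: "((\<lambda>p. snd (G p) * \<phi> p) has_integral
      (integral R1 (\<lambda>p. snd (Gb p) * \<phi> p) + integral (R2 M) (\<lambda>p. snd (Gh p) * \<phi> p))) Om"
  proof -
    have "((\<lambda>p. if p \<in> Om then snd (G p) * \<phi> p else 0) has_integral
      (integral R1 (\<lambda>p. snd (Gb p) * \<phi> p) + integral (R2 M) (\<lambda>p. snd (Gh p) * \<phi> p))) (R1 \<union> R2 M)"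
    proof (rule split_int)
      show "continuous_on R1 (\<lambda>p. snd (Gb p) * \<phi> p)" by (intro continuous_intros Gb_cont c\<phi>')
      show "continuous_on (R2 M) (\<lambda>p. snd (Gh p) * \<phi> p)" by (intro continuous_intros Gh_cont c\<phi>')
      show "\<forall>p\<in>R1. snd p < -H \<longrightarrow> (if p \<in> Om then snd (G p) * \<phi> p else 0) = snd (Gb p) * \<phi> p"
        using z by (auto simp: G_def)
      show "\<forall>p\<in>R2 M. snd p > -H \<longrightarrow> (if p \<in> Om then snd (G p) * \<phi> p else 0) = snd (Gh p) * \<phi> p"
        using z by (auto simp: G_def)
    qed
    then show ?thesis using has_integral_restrict[OF sub] by blast
  qed
  have Z1: "integral R1 (\<lambda>p. b1 p * \<phi>z p + snd (Gb p) * \<phi> p)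
        = integral {-L..L} (\<lambda>x. b1 (x,-H) * \<phi> (x,-H) - b1 (x,-H-\<delta>) * \<phi> (x,-H-\<delta>))"
  proof (rule ftc_box_z[where Q="\<lambda>p. b1 p * \<phi> p"])
    show "continuous_on R1 (\<lambda>p. b1 p * \<phi>z p + snd (Gb p) * \<phi> p)"
      by (intro continuous_intros b1_cont Gb_cont cz' c\<phi>')
    show "-H-\<delta> \<le> -H" using d_pos by simp
    fix x z assume x: "x \<in> {-L..L}" and zz: "z \<in> {-H-\<delta>..-H}"
    show "((\<lambda>z'. b1 (x,z') * \<phi> (x,z')) has_real_derivative b1 (x,z) * \<phi>z (x,z) + snd (Gb (x,z)) * \<phi> (x,z))
        (at z within {-H-\<delta>..-H})"
      by (rule DERIV_mult'[OF b1_dz[OF x zz] phi_dz[OF d]])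
  qed
  have Z2: "integral (R2 M) (\<lambda>p. b2 p * \<phi>z p + snd (Gh p) * \<phi> p)
        = integral {-L..L} (\<lambda>x. b2 (x,M) * \<phi> (x,M) - b2 (x,-H) * \<phi> (x,-H))"
  proof (rule ftc_box_z[where Q="\<lambda>p. b2 p * \<phi> p"])
    show "continuous_on (R2 M) (\<lambda>p. b2 p * \<phi>z p + snd (Gh p) * \<phi> p)"
      by (intro continuous_intros b2_cont Gh_cont cz' c\<phi>')
    show "-H \<le> M" by (rule M0)
    fix x z assume x: "x \<in> {-L..L}" and zz: "z \<in> {-H..M}"
    show "((\<lambda>z'. b2 (x,z') * \<phi> (x,z')) has_real_derivative b2 (x,z) * \<phi>z (x,z) + snd (Gh (x,z)) * \<phi> (x,z))
        (at z within {-H..M})"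
      by (rule DERIV_mult'[OF b2_dz[OF x zz] phi_dz[OF d]])
  qed
  have Z3: "integral {-L..L} (\<lambda>x. b2 (x,M) * \<phi> (x,M) - b2 (x,-H) * \<phi> (x,-H))
     = - integral {-L..L} (\<lambda>x. b1 (x,-H) * \<phi> (x,-H) - b1 (x,-H-\<delta>) * \<phi> (x,-H-\<delta>))"
  proof -
    have "integral {-L..L} (\<lambda>x. b2 (x,M) * \<phi> (x,M) - b2 (x,-H) * \<phi> (x,-H))
       = integral {-L..L} (\<lambda>x. - (b1 (x,-H) * \<phi> (x,-H) - b1 (x,-H-\<delta>) * \<phi> (x,-H-\<delta>)))"
    proof (rule integral_cong)
      fix x assume x: "x \<in> {-L..L}"
      have "\<phi> (x,M) = 0" using z notin_Om_M[OF M x] by blast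
      moreover have "\<phi> (x,-H-\<delta>) = 0" using z notin_Om_L by blast
      ultimately show "b2 (x,M) * \<phi> (x,M) - b2 (x,-H) * \<phi> (x,-H)
          = - (b1 (x,-H) * \<phi> (x,-H) - b1 (x,-H-\<delta>) * \<phi> (x,-H-\<delta>))"
        using b_interface[OF x] by simp
    qed
    then show ?thesis unfolding integral_neg .
  qed
  have A1: "integral R1 (\<lambda>p. b1 p * \<phi>z p + snd (Gb p) * \<phi> p)
      = integral R1 (\<lambda>p. b1 p * \<phi>z p) + integral R1 (\<lambda>p. snd (Gb p) * \<phi> p)"
    by (intro integral_add integrable_continuous continuous_intros b1_cont Gb_cont cz' c\<phi>')
  have A2: "integral (R2 M) (\<lambda>p. b2 p * \<phi>z p + snd (Gh p) * \<phi> p)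
      = integral (R2 M) (\<lambda>p. b2 p * \<phi>z p) + integral (R2 M) (\<lambda>p. snd (Gh p) * \<phi> p)"
    by (intro integral_add integrable_continuous continuous_intros b2_cont Gh_cont cz' c\<phi>')
  have "integral Om (\<lambda>p. ?hu p * snd (grad2 \<phi> p)) = integral Om (\<lambda>p. ?hu p * \<phi>z p)"
    by (simp add: gr)
  also have "\<dots> = integral R1 (\<lambda>p. b1 p * \<phi>z p) + integral (R2 M) (\<lambda>p. b2 p * \<phi>z p)"
    by (rule integral_unique[OF IL])
  also have "\<dots> = - (integral R1 (\<lambda>p. snd (Gb p) * \<phi> p) + integral (R2 M) (\<lambda>p. snd (Gh p) * \<phi> p))"
    using Z1 Z2 Z3 A1 A2 by simp
  also have "\<dots> = - integral Om (\<lambda>p. snd (G p) * \<phi> p)"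
    by (simp add: integral_unique[OF IR])
  finally show ?thesis .
qed

end


lemma cont_bound: "continuous_on K f \<Longrightarrow> compact K \<Longrightarrow> \<exists>B. \<forall>p\<in>K. norm (f p) \<le> B"
  using compact_continuous_image compact_imp_bounded bounded_iff by (metis image_eqI)

lemma grad2_zero: "grad2 (\<lambda>p. 0) p = 0"
proof -
  have "frechet_derivative (\<lambda>p::real\<times>real. 0::real) (at p) = (\<lambda>v. 0)"
    using frechet_derivative_at[OF has_derivative_const[of "0::real"]] by simp
  then show ?thesis unfolding grad2_def by (simp add: zero_prod_def)
qed

lemma test_zero: "test_fn \<Omega> (\<lambda>p. 0)"
proof -
  have "smooth2 (\<lambda>p. 0)" unfolding smooth2_def
    by (rule exI[of _ "{\<lambda>p. 0}"]) auto
  then show ?thesis unfolding test_fn_def by simp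
qed

lemma H10_zero: "H10_on \<Omega> (\<lambda>p. 0)"
proof -
  have m: "(\<lambda>p. 0::real) measurable_on \<Omega>"
    using measurable_on_UNIV[where f="\<lambda>p. 0::real" and S=\<Omega>] by simp
  have m2: "(\<lambda>p. 0::real\<times>real) measurable_on \<Omega>"
    using measurable_on_UNIV[where f="\<lambda>p. 0::real\<times>real" and S=\<Omega>] by simp
  have a: "H1_on \<Omega> (\<lambda>p. 0) (\<lambda>p. 0)"
    unfolding H1_on_def L2_on_def weak_grad_def using m m2 by (simp add: integrable_0)
  have b: "\<forall>n. test_fn \<Omega> ((\<lambda>n p. 0) n)" using test_zero by simp
  have d: "(\<lambda>n. integral \<Omega> (\<lambda>p. (norm (grad2 ((\<lambda>n p. 0::real) n) p - 0))\<^sup>2)) \<longlonglongrightarrow> 0"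
    by (simp add: grad2_zero)
  show ?thesis unfolding H10_on_def
    apply (rule exI[of _ "\<lambda>p. 0"])
    apply (rule conjI, rule a)
    apply (rule exI[of _ "\<lambda>n p. 0"])
    using b d by simp
qed

context ctxu begin

lemma R1_sub_Ks: "R1 \<subseteq> Ks"
  using d_lt by (auto simp: cbox_Pair_iff)

lemma Om1_sub: "Om \<inter> {p. snd p < -H} \<subseteq> R1" using Om_sub1 by blast
lemma Om2_sub: "UB M \<Longrightarrow> Om \<inter> {p. snd p > -H} \<subseteq> R2 M" using Om_sub2 by force

lemma pw_bound:
  fixes f :: "real\<times>real \<Rightarrow> 'b::real_normed_vector"
  assumes M: "UB M" and c1: "continuous_on R1 fa" and c2: "continuous_on (R2 M) fb"
    and e1: "\<forall>p\<in>Om. snd p < -H \<longrightarrow> f p = fa p" and e2: "\<forall>p\<in>Om. snd p \<ge> -H \<longrightarrow> f p = fb p"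
  shows "\<exists>B. \<forall>p\<in>Om. norm (f p) \<le> B"
proof -
  obtain B1 where B1: "\<forall>p\<in>R1. norm (fa p) \<le> B1" using cont_bound[OF c1 compact_cbox] by blast
  obtain B2 where B2: "\<forall>p\<in>R2 M. norm (fb p) \<le> B2" using cont_bound[OF c2 compact_cbox] by blast
  have "norm (f p) \<le> max B1 B2" if p: "p \<in> Om" for p
  proof (cases "snd p < -H")
    case True then show ?thesis using e1 B1 Om_sub1 p by fastforce
  next
    case False then show ?thesis using e2 B2 Om_sub2[OF M p] p by fastforce
  qed
  then show ?thesis by blast
qed

lemma hud_L2: "L2_on Om (h_ud H \<delta> hb h u)"
proof -
  obtain M where M: "UB M" using exM by blast
  have "\<exists>B. \<forall>p\<in>Om. norm (h_ud H \<delta> hb h u p) \<le> B"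
    by (rule pw_bound[OF M b1_cont b2_cont]) (auto simp: hud_eq)
  then obtain B where B: "\<forall>p\<in>Om. norm (h_ud H \<delta> hb h u p) \<le> B" by blast
  show ?thesis
  proof (rule pw_L2[OF Om_open Om_bounded _ _ _ _ B])
    show "continuous_on (Om \<inter> {p. snd p < -H}) b1" by (rule continuous_on_subset[OF b1_cont Om1_sub])
    show "continuous_on (Om \<inter> {p. snd p > -H}) b2" by (rule continuous_on_subset[OF b2_cont Om2_sub[OF M]])
  qed (auto simp: hud_eq)
qed

lemma G_L2: "L2_on Om G"
proof -
  obtain M where M: "UB M" using exM by blast
  have "\<exists>B. \<forall>p\<in>Om. norm (G p) \<le> B"
    by (rule pw_bound[OF M Gb_cont Gh_cont]) (auto simp: G_def)
  then obtain B where B: "\<forall>p\<in>Om. norm (G p) \<le> B" by blast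
  show ?thesis
  proof (rule pw_L2[OF Om_open Om_bounded _ _ _ _ B])
    show "continuous_on (Om \<inter> {p. snd p < -H}) Gb" by (rule continuous_on_subset[OF Gb_cont Om1_sub])
    show "continuous_on (Om \<inter> {p. snd p > -H}) Gh" by (rule continuous_on_subset[OF Gh_cont Om2_sub[OF M]])
  qed (auto simp: G_def)
qed

lemma hud_H1: "H1_on Om (h_ud H \<delta> hb h u) G"
  unfolding H1_on_def weak_grad_def using hud_L2 G_L2 weak_x weak_z by blast

definition "eint p = sigma_d H \<delta> \<sigma> p * (norm (G p))\<^sup>2"

lemma sigma_R1_cont: "continuous_on R1 \<sigma>"
  by (rule continuous_on_subset[OF sigma_cont R1_sub_Ks])

lemma eint_int: "eint integrable_on Om"
proof -
  obtain M where M: "UB M" using exM by blast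
  have c1: "continuous_on R1 (\<lambda>p. \<delta> * \<sigma> p * (norm (Gb p))\<^sup>2)"
    by (intro continuous_intros sigma_R1_cont Gb_cont)
  have c2: "continuous_on (R2 M) (\<lambda>p. (norm (Gh p))\<^sup>2)"
    by (intro continuous_intros Gh_cont)
  have "\<exists>B. \<forall>p\<in>Om. norm (eint p) \<le> B"
    by (rule pw_bound[OF M c1 c2]) (auto simp: eint_def sigma_d_def G_def)
  then obtain B where B: "\<forall>p\<in>Om. norm (eint p) \<le> B" by blast
  show ?thesis
  proof (rule pw_int[OF Om_open Om_bounded _ _ _ _ B])
    show "continuous_on (Om \<inter> {p. snd p < -H}) (\<lambda>p. \<delta> * \<sigma> p * (norm (Gb p))\<^sup>2)"
      by (rule continuous_on_subset[OF c1 Om1_sub])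
    show "continuous_on (Om \<inter> {p. snd p > -H}) (\<lambda>p. (norm (Gh p))\<^sup>2)"
      by (rule continuous_on_subset[OF c2 Om2_sub[OF M]])
  qed (auto simp: eint_def sigma_d_def G_def)
qed

lemma eint_mem: "integral Om eint \<in> dirichlet_energies L H \<sigma> hb h \<delta> u"
proof -
  have h10: "H10_on Om (\<lambda>p. h_ud H \<delta> hb h u p - h_ud H \<delta> hb h u p)" using H10_zero[of Om] by simp
  show ?thesis unfolding dirichlet_energies_def eint_def mem_Collect_eq
    by (rule exI[of _ "h_ud H \<delta> hb h u"], rule exI[of _ G]) (simp add: hud_H1 H10_zero)
qed

lemma sigma_d_nonneg: "p \<in> Om \<Longrightarrow> sigma_d H \<delta> \<sigma> p \<ge> 0"
proof -
  assume p: "p \<in> Om"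
  show ?thesis
  proof (cases "snd p < -H")
    case True
    then have "p \<in> Ks" using Om_sub1[OF p True] R1_sub_Ks by blast
    then have "\<sigma> p > 0" using sigma_pos by blast
    then show ?thesis using True d_pos by (simp add: sigma_d_def)
  qed (simp add: sigma_d_def)
qed

lemma DE_bdd: "bdd_below (dirichlet_energies L H \<sigma> hb h \<delta> u)"
proof (rule bdd_belowI[of _ 0])
  fix y assume "y \<in> dirichlet_energies L H \<sigma> hb h \<delta> u"
  then have "\<exists>G'::real\<times>real\<Rightarrow>real\<times>real. y = integral Om (\<lambda>p. sigma_d H \<delta> \<sigma> p * (norm (G' p))\<^sup>2)"
    unfolding dirichlet_energies_def by auto
  then obtain G' :: "real\<times>real\<Rightarrow>real\<times>real" where y: "y = integral Om (\<lambda>p. sigma_d H \<delta> \<sigma> p * (norm (G' p))\<^sup>2)"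
    by blast
  show "0 \<le> y"
  proof (cases "(\<lambda>p. sigma_d H \<delta> \<sigma> p * (norm (G' p))\<^sup>2) integrable_on Om")
    case True
    then show ?thesis unfolding y by (rule integral_nonneg) (simp add: sigma_d_nonneg)
  next
    case False
    then show ?thesis unfolding y by (simp add: not_integrable_integral)
  qed
qed

lemma Inf_le: "Inf (dirichlet_energies L H \<sigma> hb h \<delta> u) \<le> integral Om eint"
  by (rule cInf_lower[OF eint_mem DE_bdd])

end


lemma sq_le_of_sqrt: "\<bar>a::real\<bar> \<le> sqrt s \<Longrightarrow> 0 \<le> s \<Longrightarrow> a\<^sup>2 \<le> s"
proof -
  assume a: "\<bar>a\<bar> \<le> sqrt s" and s: "0 \<le> s"
  have "\<bar>a\<bar>\<^sup>2 \<le> (sqrt s)\<^sup>2" by (rule power_mono[OF a abs_ge_zero])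
  then show ?thesis using s by simp
qed

lemma strip_ineq:
  fixes Ax Bz Cw v w \<delta> sg Sm m :: real
  assumes Ax: "Ax\<^sup>2 \<le> m*(1+w\<^sup>2)" and B: "Bz\<^sup>2 \<le> m*(1+w\<^sup>2)" and Cw: "Cw\<^sup>2 \<le> m"
    and d: "0 < \<delta>" "\<delta> < 1" and s: "0 \<le> sg" "sg \<le> Sm" and m: "0 \<le> m"
  shows "\<delta> * sg * ((Ax + Cw* v)\<^sup>2 + (Bz/\<delta>)\<^sup>2) \<le> Sm*(m*(3*(1+w\<^sup>2) + 2* v\<^sup>2))/\<delta>"
proof -
  have s1: "(Ax + Cw* v)\<^sup>2 \<le> 2*Ax\<^sup>2 + 2*(Cw\<^sup>2* v\<^sup>2)"
  proof -
    have "0 \<le> (Ax - Cw* v)\<^sup>2" by simp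
    then show ?thesis by (simp add: power2_eq_square algebra_simps)
  qed
  have "Cw\<^sup>2* v\<^sup>2 \<le> m* v\<^sup>2" by (rule mult_right_mono[OF Cw]) simp
  then have X: "(Ax + Cw* v)\<^sup>2 \<le> 2*m*(1+w\<^sup>2) + 2*m* v\<^sup>2" using s1 Ax by linarith
  have Y: "(Bz/\<delta>)\<^sup>2 \<le> m*(1+w\<^sup>2)/\<delta>\<^sup>2"
    using B d by (simp add: power_divide divide_right_mono)
  let ?X = "2*m*(1+w\<^sup>2) + 2*m* v\<^sup>2" and ?Y = "m*(1+w\<^sup>2)"
  have X0: "0 \<le> ?X" "0 \<le> ?Y" using m by auto
  have "\<delta> * sg * ((Ax + Cw* v)\<^sup>2 + (Bz/\<delta>)\<^sup>2) \<le> \<delta>*Sm*(?X + ?Y/\<delta>\<^sup>2)"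
  proof (rule mult_mono)
    show "\<delta> * sg \<le> \<delta>*Sm" using d s by simp
    show "(Ax + Cw* v)\<^sup>2 + (Bz/\<delta>)\<^sup>2 \<le> ?X + ?Y/\<delta>\<^sup>2" using X Y by linarith
    show "0 \<le> \<delta>*Sm" using d s by simp
    show "0 \<le> (Ax + Cw* v)\<^sup>2 + (Bz/\<delta>)\<^sup>2" by simp
  qed
  also have "\<dots> = Sm*(\<delta>*?X + ?Y/\<delta>)" using d by (simp add: power2_eq_square field_simps)
  also have "\<dots> \<le> Sm*(?X/\<delta> + ?Y/\<delta>)"
  proof -
    have "\<delta>*?X \<le> ?X/\<delta>"
    proof -
      have "\<delta>*\<delta> \<le> 1" using d by (simp add: mult_le_one)
      have e: "\<delta>*?X*\<delta> = (\<delta>*\<delta>)*?X" by (simp only: mult_ac)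
      have "(\<delta>*\<delta>)*?X \<le> 1*?X" by (rule mult_right_mono[OF \<open>\<delta>*\<delta> \<le> 1\<close> X0(1)])
      then have "\<delta>*?X*\<delta> \<le> ?X" unfolding e by simp
      then show ?thesis using d by (simp add: field_simps)
    qed
    then show ?thesis using s by (intro mult_left_mono) auto
  qed
  also have "\<dots> = Sm*(?X + ?Y)/\<delta>" by (simp only: add_divide_distrib[symmetric] times_divide_eq_right)
  also have "?X + ?Y = m*(3*(1+w\<^sup>2) + 2* v\<^sup>2)" by (simp add: algebra_simps)
  finally show ?thesis .
qed

lemma key_ineq:
  fixes H w :: real assumes H: "H > 0" and t: "H + w \<ge> 1"
  shows "1 + w\<^sup>2 \<le> (H + w) * (1 + H + H\<^sup>2 + \<bar>w\<bar>)"
proof -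
  define t where "t = H + w"
  have w: "w = t - H" and t1: "t \<ge> 1" using t by (auto simp: t_def)
  have "(H + w) * (1 + H + H\<^sup>2 + \<bar>w\<bar>) \<ge> t * (1 + H + H\<^sup>2 + w)"
    using t1 by (auto simp: t_def intro!: mult_left_mono)
  moreover have "t * (1 + H + H\<^sup>2 + w) - (1 + w\<^sup>2) = (t - 1) + H\<^sup>2*(t - 1) + 2*t*H"
    by (simp add: w power2_eq_square algebra_simps)
  moreover have "(t - 1) + H\<^sup>2*(t - 1) + 2*t*H \<ge> 0" using t1 H by auto
  ultimately show ?thesis by linarith
qed

lemma upper_ineq:
  fixes Dx Dz Dw v T W :: real
  assumes T: "(\<bar>Dx\<bar> + \<bar>Dz\<bar>)\<^sup>2 \<le> T" and W: "Dw\<^sup>2 \<le> W"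
  shows "(Dx + Dw* v)\<^sup>2 + Dz\<^sup>2 \<le> 2*T + 2*W* v\<^sup>2"
proof -
  have s1: "(Dx + Dw* v)\<^sup>2 \<le> 2*Dx\<^sup>2 + 2*(Dw\<^sup>2* v\<^sup>2)"
  proof -
    have "0 \<le> (Dx - Dw* v)\<^sup>2" by simp
    then show ?thesis by (simp add: power2_eq_square algebra_simps)
  qed
  have "Dx\<^sup>2 + Dz\<^sup>2 \<le> (\<bar>Dx\<bar> + \<bar>Dz\<bar>)\<^sup>2"
    by (simp add: power2_eq_square algebra_simps)
  moreover have "Dw\<^sup>2* v\<^sup>2 \<le> W* v\<^sup>2" by (rule mult_right_mono[OF W]) simp
  moreover have "2 * W * v\<^sup>2 = 2 * (W * v\<^sup>2)" by simp
  moreover have "0 \<le> Dz\<^sup>2" by simp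
  ultimately show ?thesis using s1 T by linarith
qed



lemma normsq_pair: "(norm ((a::real), (b::real)))\<^sup>2 = a\<^sup>2 + b\<^sup>2"
  by (simp add: norm_Pair)

lemma blin_unit_bound:
  fixes D :: "(real\<times>real\<times>real) \<Rightarrow>\<^sub>L real"
  assumes "norm D \<le> B"
  shows "\<bar>D (1,0,0)\<bar> \<le> B" "\<bar>D (0,1,0)\<bar> \<le> B" "\<bar>D (0,0,1)\<bar> \<le> B"
proof -
  have n: "norm ((1::real),(0::real),(0::real)) = 1" "norm ((0::real),(1::real),(0::real)) = 1"
    "norm ((0::real),(0::real),(1::real)) = 1" by (simp_all add: norm_Pair)
  show "\<bar>D (1,0,0)\<bar> \<le> B" using norm_blinfun[of D "(1,0,0)"] n assms by simp
  show "\<bar>D (0,1,0)\<bar> \<le> B" using norm_blinfun[of D "(0,1,0)"] n assms by simp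
  show "\<bar>D (0,0,1)\<bar> \<le> B" using norm_blinfun[of D "(0,0,1)"] n assms by simp
qed

context ctxu begin

definition "Phi1 x = Sm*(m*(3*(1+(u x)\<^sup>2) + 2*(u1 x)\<^sup>2))"
definition "Phi2 x = 2*(4*Bc\<^sup>2 + m*(1+H+H\<^sup>2+\<bar>u x\<bar>)) + 2*(Bc\<^sup>2+m)*(u1 x)\<^sup>2"

lemma eint_strip:
  assumes p: "p \<in> Om" and zs: "snd p < -H"
  shows "eint p \<le> Phi1 (fst p) / \<delta>"
proof -
  obtain x z where pe: "p = (x,z)" by (cases p)
  have x: "x \<in> {-L..L}" and zr: "z \<in> {-H-\<delta>..-H}" and zl: "z < -H"
    using p zs pe by (auto simp: Omega_d_def)
  have ze: "ze z \<in> {-H-1..-H}" by (rule ze_in[OF zr])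
  have w: "u x \<ge> -H" using u_ge x by blast
  let ?q = "(x, ze z, u x)"
  have pq: "p1 p = ?q" using pe by (simp add: p1_def)
  have hb1: "\<bar>Dhb ?q (1,0,0)\<bar> + \<bar>Dhb ?q (0,1,0)\<bar> \<le> sqrt (m * (1 + (u x)\<^sup>2))"
    using hb_bound1 x ze w by blast
  have hb2: "\<bar>Dhb ?q (0,0,1)\<bar> \<le> sqrt m" using hb_bound2 x ze w by blast
  have m0: "0 \<le> m * (1 + (u x)\<^sup>2)" using m_pos by simp
  have A: "(Dhb ?q (1,0,0))\<^sup>2 \<le> m * (1 + (u x)\<^sup>2)"
    by (rule sq_le_of_sqrt[OF _ m0]) (use hb1 in linarith)
  have B: "(Dhb ?q (0,1,0))\<^sup>2 \<le> m * (1 + (u x)\<^sup>2)"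
    by (rule sq_le_of_sqrt[OF _ m0]) (use hb1 in linarith)
  have C: "(Dhb ?q (0,0,1))\<^sup>2 \<le> m" by (rule sq_le_of_sqrt[OF hb2]) (use m_pos in simp)
  have pK: "p \<in> Ks" using Om_sub1[OF p zs] R1_sub_Ks by blast
  have s0: "0 \<le> \<sigma> p" using bspec[OF sigma_pos pK] by simp
  have s1: "\<sigma> p \<le> Sm" using Sm(2) pK by blast
  have "eint p = \<delta> * \<sigma> p * ((Dhb ?q (1,0,0) + Dhb ?q (0,0,1) * u1 x)\<^sup>2 + (Dhb ?q (0,1,0) / \<delta>)\<^sup>2)"
    using zs pe pq by (simp add: eint_def sigma_d_def G_def Gb_def normsq_pair)
  also have "\<dots> \<le> Sm*(m*(3*(1+(u x)\<^sup>2) + 2*(u1 x)\<^sup>2))/\<delta>"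
    by (rule strip_ineq[OF A B C d_pos d_lt s0 s1]) (use m_pos in simp)
  also have "\<dots> = Phi1 (fst p) / \<delta>" using pe by (simp add: Phi1_def)
  finally show ?thesis .
qed

lemma Dh_T_bound:
  assumes x: "x \<in> {-L..L}" and z: "-H \<le> z" "z < w"
  shows "(\<bar>Dh (x,z,w) (1,0,0)\<bar> + \<bar>Dh (x,z,w) (0,1,0)\<bar>)\<^sup>2 \<le> 4*Bc\<^sup>2 + m*(1+H+H\<^sup>2+\<bar>w\<bar>)"
    and "(Dh (x,z,w) (0,0,1))\<^sup>2 \<le> Bc\<^sup>2 + m"
proof -
  have mK: "0 \<le> m*(1+H+H\<^sup>2+\<bar>w\<bar>)" using m_pos H_pos by simp
  have "(\<bar>Dh (x,z,w) (1,0,0)\<bar> + \<bar>Dh (x,z,w) (0,1,0)\<bar>)\<^sup>2 \<le> 4*Bc\<^sup>2 + m*(1+H+H\<^sup>2+\<bar>w\<bar>)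
      \<and> (Dh (x,z,w) (0,0,1))\<^sup>2 \<le> Bc\<^sup>2 + m"
  proof (cases "w < -H + 1")
    case True
    then have "(x,z,w) \<in> Kc" using x z by auto
    then have nb: "norm (Dh (x,z,w)) \<le> Bc" using Bc(2) by blast
    note bb = blin_unit_bound[OF nb]
    have "(\<bar>Dh (x,z,w) (1,0,0)\<bar> + \<bar>Dh (x,z,w) (0,1,0)\<bar>)\<^sup>2 \<le> (Bc + Bc)\<^sup>2"
      by (rule power_mono) (use bb in auto)
    moreover have "(Dh (x,z,w) (0,0,1))\<^sup>2 \<le> Bc\<^sup>2"
      using power_mono[OF bb(3) abs_ge_zero, of 2] by simp
    moreover have "(Bc + Bc)\<^sup>2 = 4*Bc\<^sup>2" by (simp add: power2_eq_square)
    ultimately show ?thesis using mK m_pos by linarith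
  next
    case False
    then have t: "H + w \<ge> 1" by simp
    have wp: "w > -H" using t by simp
    have Hw: "H + w > 0" using t by simp
    have b1: "\<bar>Dh (x,z,w) (1,0,0)\<bar> + \<bar>Dh (x,z,w) (0,1,0)\<bar> \<le> sqrt (m * (1 + w\<^sup>2) / (H + w))"
      using h_bound1 x z(1) wp by blast
    have b2: "\<bar>Dh (x,z,w) (0,0,1)\<bar> \<le> sqrt (m / (H + w))"
      using h_bound2 x z(1) wp by blast
    have "(\<bar>Dh (x,z,w) (1,0,0)\<bar> + \<bar>Dh (x,z,w) (0,1,0)\<bar>)\<^sup>2 \<le> m * (1 + w\<^sup>2) / (H + w)"
      using sq_le_of_sqrt[of "\<bar>Dh (x,z,w) (1,0,0)\<bar> + \<bar>Dh (x,z,w) (0,1,0)\<bar>"] b1 Hw m_pos by simp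
    also have "\<dots> \<le> m*(1+H+H\<^sup>2+\<bar>w\<bar>)"
    proof -
      have "(1 + w\<^sup>2) / (H + w) \<le> 1+H+H\<^sup>2+\<bar>w\<bar>"
        using key_ineq[OF H_pos t] Hw by (simp add: divide_le_eq mult.commute)
      then show ?thesis using m_pos by (metis mult_left_mono less_imp_le times_divide_eq_right)
    qed
    finally have T: "(\<bar>Dh (x,z,w) (1,0,0)\<bar> + \<bar>Dh (x,z,w) (0,1,0)\<bar>)\<^sup>2 \<le> m*(1+H+H\<^sup>2+\<bar>w\<bar>)" .
    have "(Dh (x,z,w) (0,0,1))\<^sup>2 \<le> m / (H + w)"
      using sq_le_of_sqrt[OF b2] Hw m_pos by simp
    also have "\<dots> \<le> m" using t m_pos by (simp add: divide_le_eq)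
    finally have W: "(Dh (x,z,w) (0,0,1))\<^sup>2 \<le> m" .
    have "0 \<le> Bc\<^sup>2" by simp
    then show ?thesis using T W by linarith
  qed
  then show "(\<bar>Dh (x,z,w) (1,0,0)\<bar> + \<bar>Dh (x,z,w) (0,1,0)\<bar>)\<^sup>2 \<le> 4*Bc\<^sup>2 + m*(1+H+H\<^sup>2+\<bar>w\<bar>)"
    and "(Dh (x,z,w) (0,0,1))\<^sup>2 \<le> Bc\<^sup>2 + m" by auto
qed

lemma eint_upper:
  assumes p: "p \<in> Om" and zs: "snd p \<ge> -H"
  shows "eint p \<le> Phi2 (fst p)"
proof -
  obtain x z where pe: "p = (x,z)" by (cases p)
  have x: "x \<in> {-L..L}" and z: "-H \<le> z" "z < u x"
    using p zs pe by (auto simp: Omega_d_def)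
  let ?q = "(x, z, u x)"
  have pq: "p2 p = ?q" using pe by (simp add: p2_def)
  have "eint p = (Dh ?q (1,0,0) + Dh ?q (0,0,1) * u1 x)\<^sup>2 + (Dh ?q (0,1,0))\<^sup>2"
    using zs pe pq by (simp add: eint_def sigma_d_def G_def Gh_def normsq_pair)
  also have "\<dots> \<le> 2*(4*Bc\<^sup>2 + m*(1+H+H\<^sup>2+\<bar>u x\<bar>)) + 2*(Bc\<^sup>2+m)*(u1 x)\<^sup>2"
    by (rule upper_ineq[OF Dh_T_bound(1)[OF x z] Dh_T_bound(2)[OF x z]])
  also have "\<dots> = Phi2 (fst p)" using pe by (simp add: Phi2_def)
  finally show ?thesis .
qed

end


context ctxu begin

lemma Phi1_cont: "continuous_on {-L..L} Phi1"
  unfolding Phi1_def by (intro continuous_intros u_cont u1_cont)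

lemma Phi2_cont: "continuous_on {-L..L} Phi2"
  unfolding Phi2_def by (intro continuous_intros u_cont u1_cont)

lemma Phi1_nonneg: "0 \<le> Phi1 x"
  using Sm(1) m_pos unfolding Phi1_def by (intro mult_nonneg_nonneg) auto

lemma Phi2_nonneg: "0 \<le> Phi2 x"
  using m_pos H_pos unfolding Phi2_def by (intro add_nonneg_nonneg mult_nonneg_nonneg) auto

lemma fstc: "continuous_on {-L..L} f \<Longrightarrow> continuous_on (cbox (-L, a) (L, b)) (\<lambda>p. f (fst p))"
  by (rule continuous_on_compose2[of "{-L..L}" f]) (auto intro!: continuous_intros simp: cbox_Pair_iff)

lemma energy_le:
  assumes M: "UB M"
  shows "integral Om eint \<le> integral {-L..L} Phi1 + (M + H) * integral {-L..L} Phi2"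
proof -
  have M0: "-H \<le> M" using M H_pos unfolding UB_def by auto
  let ?Psi = "\<lambda>p. if snd p < -H then Phi1 (fst p) / \<delta> else Phi2 (fst p)"
  have c1: "continuous_on R1 (\<lambda>p. Phi1 (fst p) / \<delta>)"
    using d_pos by (intro continuous_intros fstc Phi1_cont) auto
  have c2: "continuous_on (R2 M) (\<lambda>p. Phi2 (fst p))" by (intro fstc Phi2_cont)
  have IPsi: "(?Psi has_integral (integral R1 (\<lambda>p. Phi1 (fst p) / \<delta>) + integral (R2 M) (\<lambda>p. Phi2 (fst p))))
      (R1 \<union> R2 M)"
    by (rule split_int[OF c1 c2]) auto
  have IE: "((\<lambda>p. if p \<in> Om then eint p else 0) has_integral integral Om eint) (R1 \<union> R2 M)"
    using has_integral_restrict[OF Om_sub[OF M]] eint_int has_integral_integral by blast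
  have le: "integral Om eint \<le> integral R1 (\<lambda>p. Phi1 (fst p) / \<delta>) + integral (R2 M) (\<lambda>p. Phi2 (fst p))"
  proof (rule has_integral_le[OF IE IPsi])
    fix p assume "p \<in> R1 \<union> R2 M"
    show "(if p \<in> Om then eint p else 0) \<le> ?Psi p"
    proof (cases "p \<in> Om")
      case True
      then show ?thesis using eint_strip[OF True] eint_upper[OF True] by auto
    next
      case False
      then show ?thesis using Phi1_nonneg Phi2_nonneg d_pos by auto
    qed
  qed
  have e1: "integral R1 (\<lambda>p. Phi1 (fst p) / \<delta>) = integral {-L..L} Phi1"
  proof -
    have "integral R1 (\<lambda>p. Phi1 (fst p) / \<delta>) = integral (cbox (-L) L) (\<lambda>x. integral (cbox (-H-\<delta>) (-H)) (\<lambda>z. Phi1 (fst (x,z)) / \<delta>))"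
      by (rule integral_prod_continuous[OF c1])
    also have "\<dots> = integral {-L..L} Phi1"
      using d_pos by (simp add: cbox_interval content_real)
    finally show ?thesis .
  qed
  have e2: "integral (R2 M) (\<lambda>p. Phi2 (fst p)) = (M + H) * integral {-L..L} Phi2"
  proof -
    have "integral (R2 M) (\<lambda>p. Phi2 (fst p)) = integral (cbox (-L) L) (\<lambda>x. integral (cbox (-H) M) (\<lambda>z. Phi2 (fst (x,z))))"
      by (rule integral_prod_continuous[OF c2])
    also have "\<dots> = integral {-L..L} (\<lambda>x. (M + H) * Phi2 x)"
      using M0 by (simp add: cbox_interval content_real)
    also have "\<dots> = (M + H) * integral {-L..L} Phi2" by simp
    finally show ?thesis .
  qed
  show ?thesis using le e1 e2 by simp
qed

end


context ctx begin
definition "c2 = 4*L*(4*Bc\<^sup>2 + m*(1+H+H\<^sup>2))"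
definition "c3 = 2*(Bc\<^sup>2+m)"
definition "Pb M X = Sm*m*(6*L*(1+M\<^sup>2) + 2*X) + (M+H)*(c2 + 4*L*m*M + c3*X)"
end

context ctxu begin

abbreviation "XI \<equiv> integral {-L..L} (\<lambda>x. (u1 x)\<^sup>2)"

lemma u1sq_int: "(\<lambda>x. (u1 x)\<^sup>2) integrable_on {-L..L}"
  by (intro integrable_continuous_real continuous_intros u1_cont)

lemma int_affine: "integral {-L..L} (\<lambda>x. c + d * (u1 x)\<^sup>2) = c * (2*L) + d * XI"
proof -
  have "integral {-L..L} (\<lambda>x. c + d * (u1 x)\<^sup>2) = integral {-L..L} (\<lambda>x. c) + integral {-L..L} (\<lambda>x. d * (u1 x)\<^sup>2)"
    by (rule integral_add) (auto intro!: integrable_continuous_real continuous_intros u1_cont)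
  then show ?thesis using L_pos by (simp add: content_real)
qed

lemma affine_int: "(\<lambda>x. c + d * (u1 x)\<^sup>2) integrable_on {-L..L}"
  by (intro integrable_continuous_real continuous_intros u1_cont)

lemma int_Phi: assumes M: "UB M"
  shows "integral Om eint \<le> Pb M XI"
proof -
  have uM: "\<bar>u x\<bar> \<le> M" "(u x)\<^sup>2 \<le> M\<^sup>2" if "x \<in> {-L..L}" for x
  proof -
    show a: "\<bar>u x\<bar> \<le> M" using M that unfolding UB_def by blast
    show "(u x)\<^sup>2 \<le> M\<^sup>2" using power_mono[OF a abs_ge_zero, of 2] by simp
  qed
  have i1: "integral {-L..L} Phi1 \<le> integral {-L..L} (\<lambda>x. Sm*m*3*(1+M\<^sup>2) + (Sm*m*2) * (u1 x)\<^sup>2)"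
  proof (rule integral_le)
    show "Phi1 integrable_on {-L..L}" by (rule integrable_continuous_real[OF Phi1_cont])
    show "(\<lambda>x. Sm*m*3*(1+M\<^sup>2) + (Sm*m*2) * (u1 x)\<^sup>2) integrable_on {-L..L}" by (rule affine_int)
    fix x assume x: "x \<in> {-L..L}"
    have "Sm*m*(3*(1+(u x)\<^sup>2)) \<le> Sm*m*(3*(1+M\<^sup>2))"
      using uM(2)[OF x] Sm(1) m_pos by (intro mult_left_mono) auto
    then show "Phi1 x \<le> Sm*m*3*(1+M\<^sup>2) + (Sm*m*2) * (u1 x)\<^sup>2"
      unfolding Phi1_def by (simp add: algebra_simps)
  qed
  have i2: "integral {-L..L} Phi2 \<le> integral {-L..L} (\<lambda>x. 2*(4*Bc\<^sup>2 + m*(1+H+H\<^sup>2+M)) + (2*(Bc\<^sup>2+m)) * (u1 x)\<^sup>2)"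
  proof (rule integral_le)
    show "Phi2 integrable_on {-L..L}" by (rule integrable_continuous_real[OF Phi2_cont])
    show "(\<lambda>x. 2*(4*Bc\<^sup>2 + m*(1+H+H\<^sup>2+M)) + (2*(Bc\<^sup>2+m)) * (u1 x)\<^sup>2) integrable_on {-L..L}" by (rule affine_int)
    fix x assume x: "x \<in> {-L..L}"
    have "m*\<bar>u x\<bar> \<le> m*M" using uM(1)[OF x] m_pos by (intro mult_left_mono) auto
    then show "Phi2 x \<le> 2*(4*Bc\<^sup>2 + m*(1+H+H\<^sup>2+M)) + (2*(Bc\<^sup>2+m)) * (u1 x)\<^sup>2"
      unfolding Phi2_def by (simp add: algebra_simps)
  qed
  have MH: "0 \<le> M + H" using M H_pos unfolding UB_def by auto
  have "integral Om eint \<le> integral {-L..L} Phi1 + (M + H) * integral {-L..L} Phi2"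
    by (rule energy_le[OF M])
  also have "\<dots> \<le> (Sm*m*3*(1+M\<^sup>2) * (2*L) + (Sm*m*2) * XI)
       + (M + H) * (2*(4*Bc\<^sup>2 + m*(1+H+H\<^sup>2+M)) * (2*L) + (2*(Bc\<^sup>2+m)) * XI)"
    using i1 i2 MH unfolding int_affine by (intro add_mono mult_left_mono) auto
  also have "\<dots> = Pb M XI" unfolding Pb_def c2_def c3_def by (simp add: algebra_simps)
  finally show ?thesis .
qed

lemma abs_young: "0 < e \<Longrightarrow> \<bar>t::real\<bar> \<le> e * t\<^sup>2 + 1/(4*e)"
proof -
  assume e: "0 < e"
  have "0 \<le> (2*e*\<bar>t\<bar> - 1)\<^sup>2" by simp
  then have "4*e*\<bar>t\<bar> \<le> 4*e*e*t\<^sup>2 + 1"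
    by (simp add: power2_eq_square algebra_simps)
  then have "4*e*\<bar>t\<bar> \<le> 4*e*(e * t\<^sup>2 + 1/(4*e))" using e by (simp add: algebra_simps)
  then show ?thesis using e by simp
qed

lemma u_rep: "x \<in> {-L..L} \<Longrightarrow> u x = integral {-L..x} u1"
proof -
  assume x: "x \<in> {-L..L}"
  have "(u1 has_integral (u x - u (-L))) {-L..x}"
  proof (rule fundamental_theorem_of_calculus)
    show "-L \<le> x" using x by simp
    fix t assume t: "t \<in> {-L..x}"
    then have "t \<in> {-L..L}" using x by auto
    then have "(u has_real_derivative u1 t) (at t within {-L..L})" using u_der by blast
    then have "(u has_real_derivative u1 t) (at t within {-L..x})"
      by (rule DERIV_subset) (use x in auto)
    then show "(u has_vector_derivative u1 t) (at t within {-L..x})"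
      by (simp add: has_real_derivative_iff_has_vector_derivative)
  qed
  then show ?thesis using u_ends by (simp add: integral_unique)
qed

lemma u_UB: assumes e: "0 < e" shows "UB (e * XI + L/(2*e))"
  unfolding UB_def
proof
  have XI0: "0 \<le> XI" by (rule integral_nonneg[OF u1sq_int]) simp
  show "0 \<le> e * XI + L/(2*e)" using e XI0 L_pos by simp
  show "\<forall>x\<in>{-L..L}. \<bar>u x\<bar> \<le> e * XI + L/(2*e)"
  proof
    fix x assume x: "x \<in> {-L..L}"
    have sub: "{-L..x} \<subseteq> {-L..L}" using x by auto
    have ci: "continuous_on {-L..x} u1" by (rule continuous_on_subset[OF u1_cont sub])
    have gi: "(\<lambda>t. e * (u1 t)\<^sup>2 + 1/(4*e)) integrable_on {-L..x}"
      by (intro integrable_continuous_real continuous_intros ci)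
    have "\<bar>u x\<bar> = norm (integral {-L..x} u1)" using u_rep[OF x] by simp
    also have "\<dots> \<le> integral {-L..x} (\<lambda>t. e * (u1 t)\<^sup>2 + 1/(4*e))"
      by (rule integral_norm_bound_integral[OF integrable_continuous_real[OF ci] gi])
         (use abs_young[OF e] in simp)
    also have "\<dots> \<le> integral {-L..L} (\<lambda>t. e * (u1 t)\<^sup>2 + 1/(4*e))"
    proof (rule integral_subset_le[OF sub gi])
      show "(\<lambda>t. e * (u1 t)\<^sup>2 + 1/(4*e)) integrable_on {-L..L}"
        by (intro integrable_continuous_real continuous_intros u1_cont)
      show "\<forall>t\<in>{-L..L}. 0 \<le> e * (u1 t)\<^sup>2 + 1/(4*e)" using e by simp
    qed
    also have "\<dots> = e * XI + L/(2*e)"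
    proof -
      have "integral {-L..L} (\<lambda>t. e * (u1 t)\<^sup>2 + 1/(4*e)) = integral {-L..L} (\<lambda>t. 1/(4*e) + e * (u1 t)\<^sup>2)"
        by (simp add: add.commute)
      also have "\<dots> = 1/(4*e) * (2*L) + e * XI" by (rule int_affine)
      also have "\<dots> = e * XI + L/(2*e)" using e by (simp add: field_simps)
      finally show ?thesis .
    qed
    finally show "\<bar>u x\<bar> \<le> e * XI + L/(2*e)" .
  qed
qed

end


lemma quad_bound:
  fixes a b X :: real assumes a: "a > 0"
  shows "b * X \<le> a/8 * X\<^sup>2 + 2*b\<^sup>2/a"
proof -
  have "0 \<le> a/8 * (X - 4*b/a)\<^sup>2" using a by simp
  also have "a/8 * (X - 4*b/a)\<^sup>2 = a/8 * X\<^sup>2 - b * X + 2*b\<^sup>2/a"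
    using a by (simp add: power2_eq_square field_simps)
  finally show ?thesis by simp
qed

context ctx begin

lemma final:
  fixes a \<tau> \<beta> :: real
  assumes a: "a > 0" and tau: "\<tau> \<ge> 0"
  shows "\<exists>c1>0. \<forall>u u1 u2 \<delta>. barS0 L H u u1 u2 \<and> 0 < \<delta> \<and> \<delta> < 1 \<longrightarrow>
           \<beta> / 2 * integral {-L..L} (\<lambda>x. (u2 x)\<^sup>2) + a / 4 * integral {-L..L} (\<lambda>x. (u1 x)\<^sup>2)
             \<le> E_d \<beta> \<tau> a L H \<sigma> hb h \<delta> u u1 u2 + c1"
proof -
  have Sm1: "Sm \<ge> 1" by (rule Sm(1))
  have c20: "c2 \<ge> 0" unfolding c2_def using L_pos m_pos H_pos by simp
  have c30: "c3 \<ge> 0" unfolding c3_def using m_pos by simp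
  define Q where "Q = 6*L*Sm*m + 4*L*m + c3 + 1"
  have Q0: "Q > 0" unfolding Q_def using L_pos m_pos Sm1 c30 by (simp add: add_pos_nonneg)
  define e where "e = min 1 (a/(4*Q))"
  have e0: "e > 0" unfolding e_def using a Q0 by simp
  have e1: "e \<le> 1" unfolding e_def by simp
  have eQ: "e * Q \<le> a/4" unfolding e_def using Q0 a
    by (cases "1 \<le> a/(4*Q)") (auto simp: field_simps min_def)
  define k where "k = L/(2*e)"
  have k0: "k \<ge> 0" unfolding k_def using e0 L_pos by simp
  define k2 where "k2 = e\<^sup>2*(6*L*Sm*m + 4*L*m) + c3*e"
  define k1 where "k1 = 12*L*Sm*m*e*k + 2*Sm*m + c2*e + 4*L*m*(2*e*k + H*e) + c3*(k+H)"
  define k0' where "k0' = Sm*m*6*L*(1+k\<^sup>2) + (k+H)*c2 + 4*L*m*(k\<^sup>2 + H*k)"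
  have Pbe: "Pb (e*X + k) X = k2*X\<^sup>2 + k1*X + k0'" for X
    unfolding Pb_def k2_def k1_def k0'_def by (simp add: power2_eq_square algebra_simps)
  have k2a: "k2 \<le> a/4"
  proof -
    have "e\<^sup>2*(6*L*Sm*m + 4*L*m) \<le> e*(6*L*Sm*m + 4*L*m)"
    proof (rule mult_right_mono)
      show "e\<^sup>2 \<le> e" using e0 e1 by (simp add: power2_eq_square mult_le_cancel_left1)
      show "0 \<le> 6*L*Sm*m + 4*L*m" using L_pos m_pos Sm1 by simp
    qed
    then have "k2 \<le> e*Q" unfolding k2_def Q_def using e0 by (simp add: algebra_simps)
    then show ?thesis using eQ by linarith
  qed
  have k1p: "k1 \<ge> 0" unfolding k1_def using L_pos m_pos Sm1 e0 k0 c20 c30 H_pos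
    by (intro add_nonneg_nonneg mult_nonneg_nonneg) auto
  have k0p: "k0' \<ge> 0" unfolding k0'_def using L_pos m_pos Sm1 k0 c20 H_pos
    by (intro add_nonneg_nonneg mult_nonneg_nonneg) auto
  define b where "b = a/4 + k1/2"
  define c1 where "c1 = k0'/2 + 2*b\<^sup>2/a + 1"
  have c1p: "c1 > 0" unfolding c1_def using k0p a by (simp add: add_nonneg_pos)
  show ?thesis
  proof (intro exI[of _ c1] conjI allI impI c1p)
    fix u u1 u2 :: "real \<Rightarrow> real" and \<delta> :: real assume hyp: "barS0 L H u u1 u2 \<and> 0 < \<delta> \<and> \<delta> < 1"
    interpret U: ctxu L H m \<sigma> hb h Dhb Dh u u1 u2 \<delta>
      by (intro ctxu.intro ctx_axioms ctxu_axioms.intro) (use hyp in auto)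
    let ?X = "integral {-L..L} (\<lambda>x. (u1 x)\<^sup>2)"
    let ?Y = "integral {-L..L} (\<lambda>x. (u2 x)\<^sup>2)"
    let ?Inf = "Inf (dirichlet_energies L H \<sigma> hb h \<delta> u)"
    have X0: "0 \<le> ?X" by (rule integral_nonneg[OF U.u1sq_int]) simp
    have UB: "U.UB (e * ?X + k)" using U.u_UB[OF e0] unfolding k_def .
    have "?Inf \<le> integral U.Om U.eint" by (rule U.Inf_le)
    also have "\<dots> \<le> Pb (e * ?X + k) ?X" by (rule U.int_Phi[OF UB])
    also have "\<dots> = k2*?X\<^sup>2 + k1*?X + k0'" by (rule Pbe)
    also have "\<dots> \<le> a/4*?X\<^sup>2 + k1*?X + k0'"
    proof -
      have "k2 * ?X\<^sup>2 \<le> a/4 * ?X\<^sup>2" by (rule mult_right_mono[OF k2a]) simp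
      then show ?thesis by linarith
    qed
    finally have Inf: "?Inf \<le> a/4*?X\<^sup>2 + k1*?X + k0'" .
    have qb: "b * ?X \<le> a/8 * ?X\<^sup>2 + 2*b\<^sup>2/a" by (rule quad_bound[OF a])
    have tX: "0 \<le> \<tau>/2 * ?X" using tau X0 by simp
    have "\<beta>/2 * ?Y + a/4 * ?X \<le> \<beta>/2 * ?Y + (\<tau>/2 + a/4 * ?X) * ?X - 1/2 * ?Inf + c1"
    proof -
      have "a/4 * ?X \<le> \<tau>/2 * ?X + a/4 * ?X\<^sup>2 - 1/2 * (a/4*?X\<^sup>2 + k1*?X + k0') + c1"
        using qb tX unfolding b_def c1_def by (simp add: algebra_simps power2_eq_square)
      moreover have "- 1/2 * (a/4*?X\<^sup>2 + k1*?X + k0') \<le> - 1/2 * ?Inf" using Inf by simp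
      ultimately show ?thesis by (simp add: algebra_simps power2_eq_square)
    qed
    then show "\<beta> / 2 * ?Y + a / 4 * ?X \<le> E_d \<beta> \<tau> a L H \<sigma> hb h \<delta> u u1 u2 + c1"
      unfolding E_d_def by simp
  qed
qed

end

theorem mainTheorem7:
  fixes L H \<beta> \<tau> a m :: real
    and \<sigma> :: "real \<times> real \<Rightarrow> real"
    and hb h :: "real \<times> real \<times> real \<Rightarrow> real"
    and D\<sigma> :: "real \<times> real \<Rightarrow> (real \<times> real) \<Rightarrow>\<^sub>L real"
    and Dhb Dh :: "real \<times> real \<times> real \<Rightarrow> (real \<times> real \<times> real) \<Rightarrow>\<^sub>L real"
  assumes L_pos: "L > 0" and H_pos: "H > 0"
    and beta_pos: "\<beta> > 0" and tau_nonneg: "\<tau> \<ge> 0" and a_pos: "a > 0" and m_pos: "m > 0"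
    and sigma_C2: "C2_on ({-L..L} \<times> {-H-1..-H}) \<sigma> D\<sigma>"
    and sigma_pos: "\<forall>p \<in> {-L..L} \<times> {-H-1..-H}. \<sigma> p > 0"
    and hb_C2: "C2_on ({-L..L} \<times> {-H-1..-H} \<times> {-H..}) hb Dhb"
    and h_C2: "C2_on ({-L..L} \<times> {-H..} \<times> {-H..}) h Dh"
    and interface_val: "\<forall>x\<in>{-L..L}. \<forall>w\<ge>-H. hb (x, -H, w) = h (x, -H, w)"
    and interface_flux: "\<forall>x\<in>{-L..L}. \<forall>w\<ge>-H.
          \<sigma> (x, -H) * Dhb (x, -H, w) (0, 1, 0) = Dh (x, -H, w) (0, 1, 0)"
    and hb_bound1: "\<forall>x\<in>{-L..L}. \<forall>z\<in>{-H-1..-H}. \<forall>w\<ge>-H.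
          \<bar>Dhb (x, z, w) (1, 0, 0)\<bar> + \<bar>Dhb (x, z, w) (0, 1, 0)\<bar> \<le> sqrt (m * (1 + w\<^sup>2))"
    and hb_bound2: "\<forall>x\<in>{-L..L}. \<forall>z\<in>{-H-1..-H}. \<forall>w\<ge>-H.
          \<bar>Dhb (x, z, w) (0, 0, 1)\<bar> \<le> sqrt m"
    and h_bound1: "\<forall>x\<in>{-L..L}. \<forall>z\<ge>-H. \<forall>w>-H.
          \<bar>Dh (x, z, w) (1, 0, 0)\<bar> + \<bar>Dh (x, z, w) (0, 1, 0)\<bar> \<le> sqrt (m * (1 + w\<^sup>2) / (H + w))"
    and h_bound2: "\<forall>x\<in>{-L..L}. \<forall>z\<ge>-H. \<forall>w>-H.
          \<bar>Dh (x, z, w) (0, 0, 1)\<bar> \<le> sqrt (m / (H + w))"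
  shows "\<exists>c1>0. \<forall>u u1 u2 \<delta>. barS0 L H u u1 u2 \<and> 0 < \<delta> \<and> \<delta> < 1 \<longrightarrow>
           \<beta> / 2 * integral {-L..L} (\<lambda>x. (u2 x)\<^sup>2) + a / 4 * integral {-L..L} (\<lambda>x. (u1 x)\<^sup>2)
             \<le> E_d \<beta> \<tau> a L H \<sigma> hb h \<delta> u u1 u2 + c1"
proof -
  have sc: "continuous_on ({-L..L} \<times> {-H-1..-H}) \<sigma>" using C2_on_D(2)[OF sigma_C2] .
  interpret ctx L H m \<sigma> hb h Dhb Dh
    by (unfold_locales) (use L_pos H_pos m_pos sc sigma_pos hb_C2 h_C2 interface_val hb_bound1 hb_bound2 h_bound1 h_bound2 in auto)
  show ?thesis by (rule final[OF a_pos tau_nonneg])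
qed

end
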